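(* Assume $\mathsf{X}=\mathsf{Y}$ is finite. For every $D\ge0$, $$\mathrm{cl}\,\mathcal{R}(D)\supseteq \mathcal{S}(D):=\Big\{(R,R_c)\in\mathbb{R}^2:\ \exists\,P_{X,Y,U}\in\mathcal{H}(D)\text{ with } R\ge I(X;U),\ R+R_c\ge I(X,Y;U)\Big\},$$ where $\mathcal{H}(D):=\{P_{X,Y,U}: P_X=\mu,\ P_Y=\psi,\ \mathbb{E}[\rho(X,Y)]\le D,\ X-U-Y,\ |\mathsf{U}|\le|\mathsf{X}||\mathsf{Y}|+1\}$.
   Context: $\mathsf{X}=\mathsf{Y}$ is a finite set with metric $d$, distortion $\rho(x,y)=d(x,y)^p$ for some $p>0$; $\mu,\psi$ are probability distributions on $\mathsf{X}$. For $R\ge0$ let $[2^{nR}]:=\{1,\dots,\lceil 2^{nR}\rceil\}$. The source $X^n$ is i.i.d. $\mu$; $K$ is uniform on $[2^{nR_c}]$, independent of $X^n$. An $(n,R,R_c)$ randomized source code consists of a stochastic encoder $E_{J|X^n,K}$ with values in $[2^{nR}]$ and a stochastic decoder $F_{Y^n|J,K}$ with values in $\mathsf{Y}^n$; the joint law of $(K,X^n,J,Y^n)$ is $F_{Y^n|J,K}E_{J|X^n,K}P_KP_{X^n}$. $\rho_n(x^n,y^n)=\frac1n\sum_i\rho(x_i,y_i)$. A pair $(R,R_c)$ is achievable at distortion $D$ if for every $\varepsilon>0$ and all large $n$ there is such a code with $\mathbb{E}[\rho_n(X^n,Y^n)]\le D+\varepsilon$ and $Y^n\sim\psi^n$ exactly;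 $\mathcal{R}(D)$ is the set of achievable pairs. *)

theory Defs
  imports "HOL-Probability.Probability"
begin

definition idx_set :: "nat \<Rightarrow> real \<Rightarrow> nat set" where
  "idx_set n R = {1 .. nat \<lceil>2 powr (real n * R)\<rceil>}"

fun iid_pmf :: "nat \<Rightarrow> 'a pmf \<Rightarrow> 'a list pmf" where
  "iid_pmf 0 p = return_pmf []"
| "iid_pmf (Suc n) p = bind_pmf p (\<lambda>x. map_pmf (\<lambda>xs. x # xs) (iid_pmf n p))"

definition rho_n :: "('a \<Rightarrow> 'a \<Rightarrow> real) \<Rightarrow> nat \<Rightarrow> 'a list \<Rightarrow> 'a list \<Rightarrow> real" where
  "rho_n \<rho> n xs ys = (1 / real n) * sum_list (map2 \<rho> xs ys)"

text \<open>Joint law of (K, X^n, J, Y^n) for a randomized code with encoder E (key, source seq)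
  and decoder F (message, key).\<close>
definition code_law :: "nat \<Rightarrow> real \<Rightarrow> 'a pmf \<Rightarrow> (nat \<Rightarrow> 'a list \<Rightarrow> nat pmf)
    \<Rightarrow> (nat \<Rightarrow> nat \<Rightarrow> 'a list pmf) \<Rightarrow> (nat \<times> 'a list \<times> nat \<times> 'a list) pmf" where
  "code_law n Rc \<mu> E F =
     bind_pmf (pmf_of_set (idx_set n Rc)) (\<lambda>k.
     bind_pmf (iid_pmf n \<mu>) (\<lambda>x.
     bind_pmf (E k x) (\<lambda>j.
     bind_pmf (F j k) (\<lambda>y. return_pmf (k, x, j, y)))))"

definition is_code :: "nat \<Rightarrow> real \<Rightarrow> real \<Rightarrow> (nat \<Rightarrow> 'a list \<Rightarrow> nat pmf)
    \<Rightarrow> (nat \<Rightarrow> nat \<Rightarrow> 'a list pmf) \<Rightarrow> bool" where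
  "is_code n R Rc E F \<longleftrightarrow>
     (\<forall>k \<in> idx_set n Rc. \<forall>x. length x = n \<longrightarrow> set_pmf (E k x) \<subseteq> idx_set n R) \<and>
     (\<forall>j k. set_pmf (F j k) \<subseteq> {ys. length ys = n})"

definition achievable :: "('a \<Rightarrow> 'a \<Rightarrow> real) \<Rightarrow> 'a pmf \<Rightarrow> 'a pmf \<Rightarrow> real \<Rightarrow> real \<Rightarrow> real \<Rightarrow> bool" where
  "achievable \<rho> \<mu> \<psi> D R Rc \<longleftrightarrow>
     (\<forall>\<epsilon>>0. \<exists>N. \<forall>n\<ge>N. \<exists>E F. is_code n R Rc E F \<and>
        measure_pmf.expectation (code_law n Rc \<mu> E F) (\<lambda>(k, x, j, y). rho_n \<rho> n x y) \<le> D + \<epsilon> \<and>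
        map_pmf (\<lambda>(k, x, j, y). y) (code_law n Rc \<mu> E F) = iid_pmf n \<psi>)"

definition rate_region :: "('a \<Rightarrow> 'a \<Rightarrow> real) \<Rightarrow> 'a pmf \<Rightarrow> 'a pmf \<Rightarrow> real \<Rightarrow> (real \<times> real) set" where
  "rate_region \<rho> \<mu> \<psi> D = {(R, Rc). achievable \<rho> \<mu> \<psi> D R Rc}"

definition mi :: "'c pmf \<Rightarrow> ('c \<Rightarrow> 'd) \<Rightarrow> ('c \<Rightarrow> 'e) \<Rightarrow> real" where
  "mi P A B = prob_space.mutual_information (measure_pmf P) 2
      (count_space UNIV) (count_space UNIV) A B"

definition markov_XUY :: "('a \<times> 'b \<times> 'u) pmf \<Rightarrow> bool" where
  "markov_XUY P \<longleftrightarrow> (\<forall>x y u.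
     pmf P (x, y, u) * pmf (map_pmf (\<lambda>(x, y, u). u) P) u =
     pmf (map_pmf (\<lambda>(x, y, u). (x, u)) P) (x, u) * pmf (map_pmf (\<lambda>(x, y, u). (y, u)) P) (y, u))"

text \<open>H(D): auxiliary alphabet U identified with {0,...,|X||Y|} (size |X||Y|+1).\<close>
definition H_set :: "('a::finite \<Rightarrow> 'a \<Rightarrow> real) \<Rightarrow> 'a pmf \<Rightarrow> 'a pmf \<Rightarrow> real \<Rightarrow> ('a \<times> 'a \<times> nat) pmf set" where
  "H_set \<rho> \<mu> \<psi> D = {P.
     map_pmf (\<lambda>(x, y, u). x) P = \<mu> \<and>
     map_pmf (\<lambda>(x, y, u). y) P = \<psi> \<and>
     measure_pmf.expectation P (\<lambda>(x, y, u). \<rho> x y) \<le> D \<and>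
     markov_XUY P \<and>
     (\<forall>(x, y, u) \<in> set_pmf P. u < CARD('a) * CARD('a) + 1)}"

definition S_set :: "('a::finite \<Rightarrow> 'a \<Rightarrow> real) \<Rightarrow> 'a pmf \<Rightarrow> 'a pmf \<Rightarrow> real \<Rightarrow> (real \<times> real) set" where
  "S_set \<rho> \<mu> \<psi> D = {(R, Rc). \<exists>P \<in> H_set \<rho> \<mu> \<psi> D.
     R \<ge> mi P (\<lambda>(x, y, u). x) (\<lambda>(x, y, u). u) \<and>
     R + Rc \<ge> mi P (\<lambda>(x, y, u). (x, y)) (\<lambda>(x, y, u). u)}"

end

theory Submission
  imports Defs "HOL-Real_Asymp.Real_Asymp"
begin

lemma distributed_pmf:
  fixes A :: "'c \<Rightarrow> 'd::countable"
  shows "distributed (measure_pmf P) (count_space UNIV) A (\<lambda>x. ennreal (pmf (map_pmf A P) x))"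
  unfolding distributed_def
  by (simp add: map_pmf_rep_eq[symmetric] measure_pmf_eq_density[of "map_pmf A P"])

lemma mi_finite:
  fixes P :: "'c pmf" and A :: "'c \<Rightarrow> 'd::countable" and B :: "'c \<Rightarrow> 'e::countable"
  assumes fin: "finite (set_pmf P)"
  shows "mi P A B = (\<Sum>z\<in>set_pmf (map_pmf (\<lambda>c. (A c, B c)) P).
     pmf (map_pmf (\<lambda>c. (A c, B c)) P) z *
     log 2 (pmf (map_pmf (\<lambda>c. (A c, B c)) P) z / (pmf (map_pmf A P) (fst z) * pmf (map_pmf B P) (snd z))))"
proof -
  interpret information_space "measure_pmf P" 2 by standard simp
  let ?J = "map_pmf (\<lambda>c. (A c, B c)) P"
  have finJ: "finite (set_pmf ?J)" using fin by simp
  have cs: "count_space (UNIV::'d set) \<Otimes>\<^sub>M count_space (UNIV::'e set) = count_space UNIV"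
    by (simp add: pair_measure_countable)
  have dJ: "distributed (measure_pmf P) (count_space UNIV \<Otimes>\<^sub>M count_space UNIV) (\<lambda>c. (A c, B c))
       (\<lambda>x. ennreal (pmf ?J x))"
    unfolding cs by (rule distributed_pmf)
  have "mi P A B = integral\<^sup>L (count_space UNIV \<Otimes>\<^sub>M count_space UNIV)
      (\<lambda>x. pmf ?J x * log 2 (pmf ?J x / (pmf (map_pmf A P) (fst x) * pmf (map_pmf B P) (snd x))))"
    unfolding mi_def
    by (rule mutual_information_distr[OF _ _ distributed_pmf _ distributed_pmf _ dJ])
       (auto intro!: sigma_finite_measure_count_space_countable)
  also have "\<dots> = (\<Sum>z\<in>set_pmf ?J. pmf ?J z * log 2 (pmf ?J z / (pmf (map_pmf A P) (fst z) * pmf (map_pmf B P) (snd z))))"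
    unfolding cs
    apply (subst lebesgue_integral_count_space_finite_support)
    subgoal by (rule finite_subset[of _ "set_pmf ?J"]) (use finJ in \<open>auto simp: set_pmf_iff simp del: set_map_pmf\<close>)
    apply (rule sum.mono_neutral_left)
    using finJ by (auto simp: set_pmf_iff simp del: set_map_pmf)
  finally show ?thesis .
qed

definition ex :: "'a pmf \<Rightarrow> ('a \<Rightarrow> real) \<Rightarrow> real" where
  "ex p f = (\<Sum>x\<in>set_pmf p. pmf p x * f x)"

abbreviation fs :: "'a pmf \<Rightarrow> bool" where "fs p \<equiv> finite (set_pmf p)"

lemma ex_eq_integral: "fs p \<Longrightarrow> measure_pmf.expectation p f = ex p f"
  unfolding ex_def by (subst integral_measure_pmf_real[of "set_pmf p"]) (auto simp: mult.commute)

lemma ex_superset: "finite A \<Longrightarrow> set_pmf p \<subseteq> A \<Longrightarrow> ex p f = (\<Sum>x\<in>A. pmf p x * f x)"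
  unfolding ex_def by (rule sum.mono_neutral_left) (auto simp: set_pmf_iff)

lemma ex_cong: "(\<And>x. x \<in> set_pmf p \<Longrightarrow> f x = g x) \<Longrightarrow> ex p f = ex p g"
  unfolding ex_def by (rule sum.cong) auto

lemma ex_const[simp]: "fs p \<Longrightarrow> ex p (\<lambda>x. c) = c"
proof -
  assume "fs p"
  have "ex p (\<lambda>x. c) = measure_pmf.expectation p (\<lambda>x. c)" using \<open>fs p\<close> by (rule ex_eq_integral[symmetric])
  also have "\<dots> = c" by simp
  finally show ?thesis .
qed

lemma ex_one: "fs p \<Longrightarrow> (\<Sum>x\<in>set_pmf p. pmf p x) = 1"
  using ex_const[of p 1] by (simp add: ex_def)

lemma ex_add: "ex p (\<lambda>x. f x + g x) = ex p f + ex p g"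
  unfolding ex_def by (simp add: distrib_left sum.distrib)
lemma ex_diff: "ex p (\<lambda>x. f x - g x) = ex p f - ex p g"
  unfolding ex_def by (simp add: right_diff_distrib sum_subtractf)
lemma ex_cmult: "ex p (\<lambda>x. c * f x) = c * ex p f"
  unfolding ex_def by (simp add: sum_distrib_left mult.left_commute)
lemma ex_multc: "ex p (\<lambda>x. f x * c) = ex p f * c"
  unfolding ex_def by (simp add: sum_distrib_right mult.assoc)
lemma ex_divc: "ex p (\<lambda>x. f x / c) = ex p f / c"
  unfolding ex_def by (simp add: sum_divide_distrib)
lemma ex_sum: "ex p (\<lambda>x. \<Sum>i\<in>I. f i x) = (\<Sum>i\<in>I. ex p (f i))"
  unfolding ex_def by (simp add: sum_distrib_left sum.swap[of _ I])
lemma ex_mono: "(\<And>x. x \<in> set_pmf p \<Longrightarrow> f x \<le> g x) \<Longrightarrow> ex p f \<le> ex p g"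
  unfolding ex_def by (rule sum_mono) (simp add: mult_left_mono)
lemma ex_nonneg: "(\<And>x. x \<in> set_pmf p \<Longrightarrow> 0 \<le> f x) \<Longrightarrow> 0 \<le> ex p f"
  unfolding ex_def by (rule sum_nonneg) simp
lemma ex_abs: "\<bar>ex p f\<bar> \<le> ex p (\<lambda>x. \<bar>f x\<bar>)"
  unfolding ex_def by (rule order_trans[OF sum_abs]) (simp add: abs_mult)
lemma ex_le_const: "fs p \<Longrightarrow> (\<And>x. x \<in> set_pmf p \<Longrightarrow> f x \<le> c) \<Longrightarrow> ex p f \<le> c"
  using ex_mono[of p f "\<lambda>_. c"] by simp
lemma ex_ge_const: "fs p \<Longrightarrow> (\<And>x. x \<in> set_pmf p \<Longrightarrow> c \<le> f x) \<Longrightarrow> c \<le> ex p f"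
  using ex_mono[of p "\<lambda>_. c" f] by simp

lemma ex_return[simp]: "ex (return_pmf a) f = f a"
  unfolding ex_def by simp

lemma ex_map: "fs p \<Longrightarrow> ex (map_pmf g p) f = ex p (\<lambda>x. f (g x))"
  by (simp add: ex_eq_integral[symmetric])

lemma pmf_bind_ex: "fs p \<Longrightarrow> pmf (bind_pmf p N) y = ex p (\<lambda>x. pmf (N x) y)"
  by (simp add: pmf_bind ex_eq_integral)

lemma fs_bind: "fs p \<Longrightarrow> (\<And>x. x \<in> set_pmf p \<Longrightarrow> fs (N x)) \<Longrightarrow> fs (bind_pmf p N)"
  by simp

lemma ex_bind:
  assumes "fs p" "\<And>x. x \<in> set_pmf p \<Longrightarrow> fs (N x)"
  shows "ex (bind_pmf p N) f = ex p (\<lambda>x. ex (N x) f)"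
proof -
  let ?S = "set_pmf (bind_pmf p N)"
  have fS: "finite ?S" using assms by simp
  have "ex (bind_pmf p N) f = (\<Sum>y\<in>?S. (\<Sum>x\<in>set_pmf p. pmf p x * pmf (N x) y) * f y)"
    unfolding ex_def pmf_bind_ex[OF assms(1)] ex_def ..
  also have "\<dots> = (\<Sum>x\<in>set_pmf p. pmf p x * (\<Sum>y\<in>?S. pmf (N x) y * f y))"
    by (simp add: sum_distrib_right sum_distrib_left sum.swap[of _ "set_pmf p"] mult.assoc)
  also have "\<dots> = ex p (\<lambda>x. ex (N x) f)"
    unfolding ex_def
    by (rule sum.cong[OF refl], subst ex_superset[OF fS, symmetric, unfolded ex_def]) auto
  finally show ?thesis .
qed

lemma ex_pair:
  assumes "fs p" "fs q"
  shows "ex (pair_pmf p q) f = ex p (\<lambda>x. ex q (\<lambda>y. f (x, y)))"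
  unfolding pair_pmf_def using assms by (simp add: ex_bind)

lemma ex_pmf_of_set: "finite A \<Longrightarrow> A \<noteq> {} \<Longrightarrow> ex (pmf_of_set A) f = (\<Sum>a\<in>A. f a) / card A"
  unfolding ex_def by (simp add: sum_divide_distrib)

lemma ex_indicator: "fs p \<Longrightarrow> ex p (\<lambda>x. if P x then 1 else 0) = measure_pmf.prob p {x. P x}"
proof -
  assume "fs p"
  have "(\<lambda>x. if P x then 1 else 0::real) = indicator {x. P x}" by (auto simp: indicator_def)
  then show ?thesis using ex_eq_integral[OF \<open>fs p\<close>, of "indicator {x. P x}"] by simp
qed

lemma ex_sq_ge: "fs p \<Longrightarrow> (ex p f)^2 \<le> ex p (\<lambda>x. (f x)^2)"
proof -
  assume fp: "fs p"
  let ?c = "ex p f"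
  have "0 \<le> ex p (\<lambda>x. (f x - ?c)^2)" by (rule ex_nonneg) simp
  also have "ex p (\<lambda>x. (f x - ?c)^2) = ex p (\<lambda>x. (f x)^2) - 2 * ?c * ?c + ?c^2"
  proof -
    have "ex p (\<lambda>x. (f x - ?c)^2) = ex p (\<lambda>x. ((f x)^2 - (2 * ?c) * f x) + ?c^2)"
      by (rule ex_cong) (simp add: power2_eq_square algebra_simps)
    also have "\<dots> = ex p (\<lambda>x. (f x)^2) - 2 * ?c * ?c + ?c^2"
      using fp by (simp add: ex_add ex_diff ex_cmult)
    finally show ?thesis .
  qed
  finally show ?thesis by (simp add: power2_eq_square)
qed

lemma ex_abs_sqrt: "fs p \<Longrightarrow> ex p (\<lambda>x. \<bar>f x\<bar>) \<le> sqrt (ex p (\<lambda>x. (f x)^2))"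
  using ex_sq_ge[of p "\<lambda>x. \<bar>f x\<bar>"] by (simp add: real_le_rsqrt)

lemma iid_Suc: "iid_pmf (Suc n) p = bind_pmf p (\<lambda>x. map_pmf (\<lambda>xs. x # xs) (iid_pmf n p))"
  by simp

lemma set_iid: "set_pmf (iid_pmf n p) = {xs. length xs = n \<and> set xs \<subseteq> set_pmf p}"
proof (induction n)
  case 0 then show ?case by auto
next
  case (Suc n)
  show ?case
  proof (rule set_eqI)
    fix xs show "xs \<in> set_pmf (iid_pmf (Suc n) p) \<longleftrightarrow> xs \<in> {xs. length xs = Suc n \<and> set xs \<subseteq> set_pmf p}"
      using Suc by (cases xs) auto
  qed
qed

lemma fs_iid[simp]: "fs p \<Longrightarrow> fs (iid_pmf n p)"
  unfolding set_iid using finite_lists_length_eq[of "set_pmf p" n] by (simp add: conj_commute)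

lemma pmf_map_Cons: "pmf (map_pmf (\<lambda>xs. x # xs) q) (y # ys) = (if x = y then pmf q ys else 0)"
proof -
  have "(\<lambda>xs. x # xs) -` {y # ys} = (if x = y then {ys} else {})" by auto
  then show ?thesis by (simp add: pmf_map measure_pmf_single)
qed

lemma pmf_map_Cons_Nil: "pmf (map_pmf (\<lambda>xs. x # xs) q) [] = 0"
proof -
  have "(\<lambda>xs. x # xs) -` {[]} = {}" by auto
  then show ?thesis by (simp add: pmf_map)
qed

lemma ex_point: "fs p \<Longrightarrow> ex p (\<lambda>x. if x = y then c else 0) = pmf p y * c"
  unfolding ex_def by (cases "y \<in> set_pmf p") (auto simp: set_pmf_iff if_distrib sum.If_cases cong: if_cong)

lemma pmf_iid: "fs p \<Longrightarrow> pmf (iid_pmf n p) xs = (if length xs = n then prod_list (map (pmf p) xs) else 0)"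
proof (induction n arbitrary: xs)
  case 0 then show ?case by (cases xs) auto
next
  case (Suc n)
  show ?case
  proof (cases xs)
    case Nil then show ?thesis using Suc.prems by (simp add: pmf_bind_ex pmf_map_Cons_Nil ex_def)
  next
    case (Cons y ys)
    have "pmf (iid_pmf (Suc n) p) xs = ex p (\<lambda>x. if x = y then pmf (iid_pmf n p) ys else 0)"
      using Suc.prems Cons by (simp add: pmf_bind_ex pmf_map_Cons)
    also have "\<dots> = pmf p y * pmf (iid_pmf n p) ys" using Suc.prems by (rule ex_point)
    finally show ?thesis using Suc Cons by simp
  qed
qed

lemma ex_iid_Suc: "fs p \<Longrightarrow> ex (iid_pmf (Suc n) p) f = ex p (\<lambda>x. ex (iid_pmf n p) (\<lambda>xs. f (x # xs)))"
  by (simp only: iid_Suc, subst ex_bind) (auto simp: ex_map)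

lemma ex_iid_sum: "fs p \<Longrightarrow> ex (iid_pmf n p) (\<lambda>xs. sum_list (map g xs)) = real n * ex p g"
proof (induction n)
  case 0 then show ?case by simp
next
  case (Suc n)
  have "ex (iid_pmf (Suc n) p) (\<lambda>xs. sum_list (map g xs)) =
        ex p (\<lambda>x. g x + ex (iid_pmf n p) (\<lambda>xs. sum_list (map g xs)))"
    using Suc.prems by (simp add: ex_iid_Suc ex_add del: iid_pmf.simps)
  also have "\<dots> = ex p g + real n * ex p g" using Suc by (simp add: ex_add)
  finally show ?case by (simp add: algebra_simps)
qed

lemma ex_iid_sq:
  assumes "fs p" "ex p g = 0"
  shows "ex (iid_pmf n p) (\<lambda>xs. (sum_list (map g xs))^2) = real n * ex p (\<lambda>x. (g x)^2)"
proof (induction n)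
  case 0 then show ?case by simp
next
  case (Suc n)
  let ?S = "\<lambda>xs. sum_list (map g xs)"
  have "ex (iid_pmf (Suc n) p) (\<lambda>xs. (?S xs)^2) =
        ex p (\<lambda>x. ex (iid_pmf n p) (\<lambda>xs. (g x)^2 + (2 * g x) * ?S xs + (?S xs)^2))"
    using assms by (simp add: ex_iid_Suc power2_eq_square algebra_simps del: iid_pmf.simps)
  also have "\<dots> = ex p (\<lambda>x. (g x)^2 + (2 * g x) * (real n * ex p g) + real n * ex p (\<lambda>x. (g x)^2))"
    using assms Suc by (simp add: ex_add ex_cmult ex_iid_sum)
  also have "\<dots> = ex p (\<lambda>x. (g x)^2) + real n * ex p (\<lambda>x. (g x)^2)"
    using assms by (simp add: ex_add)
  finally show ?case by (simp add: algebra_simps)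
qed

lemma iid_map: "map_pmf (map f) (iid_pmf n p) = iid_pmf n (map_pmf f p)"
proof (induction n)
  case 0 then show ?case by simp
next
  case (Suc n)
  have "map_pmf (map f) (iid_pmf (Suc n) p) = bind_pmf p (\<lambda>x. map_pmf (\<lambda>xs. f x # xs) (map_pmf (map f) (iid_pmf n p)))"
    by (simp add: map_bind_pmf pmf.map_comp o_def)
  also have "\<dots> = iid_pmf (Suc n) (map_pmf f p)" by (simp add: Suc bind_map_pmf)
  finally show ?case .
qed

lemma iid_add: "iid_pmf (a + b) p = bind_pmf (iid_pmf a p) (\<lambda>xs. map_pmf (\<lambda>ys. xs @ ys) (iid_pmf b p))"
proof (induction a)
  case 0
  have h: "(@) [] = (id::'a list \<Rightarrow> 'a list)" by (rule ext) simp
  show ?case by (simp add: bind_return_pmf h pmf.map_id)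
next
  case (Suc a)
  show ?case
    apply (simp add: Suc bind_assoc_pmf bind_map_pmf map_bind_pmf pmf.map_comp o_def)
    apply (intro bind_pmf_cong refl map_pmf_cong)
    apply simp
    done
qed

lemma iid_concat: "map_pmf concat (iid_pmf m (iid_pmf k p)) = iid_pmf (m * k) p"
proof (induction m)
  case 0 then show ?case by simp
next
  case (Suc m)
  have "map_pmf concat (iid_pmf (Suc m) (iid_pmf k p)) =
     bind_pmf (iid_pmf k p) (\<lambda>xs. map_pmf (\<lambda>ys. xs @ ys) (map_pmf concat (iid_pmf m (iid_pmf k p))))"
    by (simp add: map_bind_pmf pmf.map_comp o_def)
  also have "\<dots> = iid_pmf (k + m * k) p" by (simp add: Suc iid_add)
  finally show ?case by (simp add: add.commute)
qed

fun chan :: "('u \<Rightarrow> 'v pmf) \<Rightarrow> 'u list \<Rightarrow> 'v list pmf" where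
  "chan K [] = return_pmf []"
| "chan K (u # us) = bind_pmf (K u) (\<lambda>v. map_pmf (\<lambda>vs. v # vs) (chan K us))"

lemma set_chan: "set_pmf (chan K us) = {vs. list_all2 (\<lambda>u v. v \<in> set_pmf (K u)) us vs}"
proof (induction us)
  case Nil then show ?case by auto
next
  case (Cons u us)
  show ?case
  proof (rule set_eqI)
    fix vs show "vs \<in> set_pmf (chan K (u # us)) \<longleftrightarrow> vs \<in> {vs. list_all2 (\<lambda>u v. v \<in> set_pmf (K u)) (u # us) vs}"
      using Cons by (cases vs) auto
  qed
qed

lemma length_chan: "vs \<in> set_pmf (chan K us) \<Longrightarrow> length vs = length us"
  by (auto simp: set_chan list_all2_lengthD)

lemma fs_chan: "(\<And>u. u \<in> set us \<Longrightarrow> fs (K u)) \<Longrightarrow> fs (chan K us)"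
  by (induction us) auto

lemma pmf_chan: "(\<And>u. u \<in> set us \<Longrightarrow> fs (K u)) \<Longrightarrow>
  pmf (chan K us) vs = (if length vs = length us then prod_list (map2 (\<lambda>u v. pmf (K u) v) us vs) else 0)"
proof (induction us arbitrary: vs)
  case Nil then show ?case by (cases vs) auto
next
  case (Cons u us)
  show ?case
  proof (cases vs)
    case Nil then show ?thesis using Cons.prems by (simp add: pmf_bind_ex pmf_map_Cons_Nil ex_def)
  next
    fix y ys assume Cons2: "vs = y # ys"
    have "pmf (chan K (u # us)) vs = ex (K u) (\<lambda>x. if x = y then pmf (chan K us) ys else 0)"
      using Cons.prems Cons2 by (simp add: pmf_bind_ex pmf_map_Cons)
    also have "\<dots> = pmf (K u) y * pmf (chan K us) ys" using Cons.prems by (intro ex_point) auto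
    finally show ?thesis using Cons Cons2 by simp
  qed
qed

lemma chan_map: "map_pmf (map f) (chan K us) = chan (\<lambda>u. map_pmf f (K u)) us"
proof (induction us)
  case Nil then show ?case by simp
next
  case (Cons u us)
  have "map_pmf (map f) (chan K (u # us)) = bind_pmf (K u) (\<lambda>x. map_pmf (\<lambda>xs. f x # xs) (map_pmf (map f) (chan K us)))"
    by (simp add: map_bind_pmf pmf.map_comp o_def)
  also have "\<dots> = chan (\<lambda>u. map_pmf f (K u)) (u # us)" by (simp add: Cons bind_map_pmf)
  finally show ?case .
qed

lemma chan_const: "chan (\<lambda>u. p) us = iid_pmf (length us) p"
  by (induction us) simp_all

lemma bind_iid_chan:
  "bind_pmf (iid_pmf n q) (\<lambda>us. map_pmf (\<lambda>vs. (us, vs)) (chan K us)) =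
   map_pmf (\<lambda>ps. (map fst ps, map snd ps)) (iid_pmf n (bind_pmf q (\<lambda>u. map_pmf (Pair u) (K u))))"
proof (induction n)
  case 0 then show ?case by (simp add: bind_return_pmf)
next
  case (Suc n)
  have "bind_pmf (iid_pmf (Suc n) q) (\<lambda>us. map_pmf (\<lambda>vs. (us, vs)) (chan K us)) =
     bind_pmf q (\<lambda>u. bind_pmf (K u) (\<lambda>v. map_pmf (\<lambda>(us, vs). (u # us, v # vs))
        (bind_pmf (iid_pmf n q) (\<lambda>us. map_pmf (\<lambda>vs. (us, vs)) (chan K us)))))"
    apply (simp add: bind_assoc_pmf bind_map_pmf map_bind_pmf pmf.map_comp o_def)
    apply (rule bind_pmf_cong[OF refl])
    apply (subst bind_commute_pmf)
    apply (simp add: map_pmf_def bind_assoc_pmf bind_return_pmf)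
    done
  also have "\<dots> = map_pmf (\<lambda>ps. (map fst ps, map snd ps)) (iid_pmf (Suc n) (bind_pmf q (\<lambda>u. map_pmf (Pair u) (K u))))"
    by (simp add: Suc bind_assoc_pmf bind_map_pmf map_bind_pmf pmf.map_comp o_def)
  finally show ?case .
qed

lemma bind_iid_chan': "bind_pmf (iid_pmf n q) (chan K) = iid_pmf n (bind_pmf q K)"
proof -
  have "bind_pmf (iid_pmf n q) (chan K) = map_pmf snd (bind_pmf (iid_pmf n q) (\<lambda>us. map_pmf (\<lambda>vs. (us, vs)) (chan K us)))"
    by (simp add: map_bind_pmf pmf.map_comp o_def)
  also have "\<dots> = map_pmf (map snd) (iid_pmf n (bind_pmf q (\<lambda>u. map_pmf (Pair u) (K u))))"
    by (simp add: bind_iid_chan pmf.map_comp o_def)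
  also have "\<dots> = iid_pmf n (bind_pmf q K)"
    by (simp add: iid_map map_bind_pmf pmf.map_comp o_def)
  finally show ?thesis .
qed

lemma chan_pair:
  "(\<And>u. u \<in> set c \<Longrightarrow> K u = pair_pmf (A u) (B u)) \<Longrightarrow>
   map_pmf (\<lambda>ps. (map fst ps, map snd ps)) (chan K c) = pair_pmf (chan A c) (chan B c)"
proof (induction c)
  case Nil then show ?case by simp
next
  case (Cons u c)
  have IH: "map_pmf (\<lambda>ps. (map fst ps, map snd ps)) (chan K c) = pair_pmf (chan A c) (chan B c)"
    using Cons by simp
  have "map_pmf (\<lambda>ps. (map fst ps, map snd ps)) (chan K (u # c)) =
     bind_pmf (pair_pmf (A u) (B u)) (\<lambda>v. map_pmf (\<lambda>(xs, ys). (fst v # xs, snd v # ys))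
        (map_pmf (\<lambda>ps. (map fst ps, map snd ps)) (chan K c)))"
    using Cons.prems by (simp add: map_bind_pmf pmf.map_comp o_def split_beta)
  also have "\<dots> = pair_pmf (chan A (u # c)) (chan B (u # c))"
    unfolding IH
    apply (simp add: pair_pmf_def bind_assoc_pmf bind_map_pmf map_bind_pmf bind_return_pmf map_pmf_def)
    apply (rule bind_pmf_cong[OF refl])
    apply (subst bind_commute_pmf)
    apply (rule bind_pmf_cong[OF refl])
    apply (rule refl)
    done
  finally show ?case .
qed

definition tv :: "'a pmf \<Rightarrow> 'a pmf \<Rightarrow> real" where
  "tv a b = (\<Sum>x\<in>set_pmf a \<union> set_pmf b. \<bar>pmf a x - pmf b x\<bar>)"

lemma tv_superset: "finite A \<Longrightarrow> set_pmf a \<subseteq> A \<Longrightarrow> set_pmf b \<subseteq> A \<Longrightarrow>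
   tv a b = (\<Sum>x\<in>A. \<bar>pmf a x - pmf b x\<bar>)"
  unfolding tv_def by (rule sum.mono_neutral_left) (auto simp: set_pmf_iff)

lemma tv_nonneg: "0 \<le> tv a b" unfolding tv_def by (rule sum_nonneg) simp

lemma tv_sym: "tv a b = tv b a" unfolding tv_def by (simp add: Un_commute abs_minus_commute)

lemma tv_triangle: assumes "fs a" "fs b" "fs c" shows "tv a c \<le> tv a b + tv b c"
proof -
  let ?A = "set_pmf a \<union> set_pmf b \<union> set_pmf c"
  have f: "finite ?A" using assms by simp
  have "tv a c = (\<Sum>x\<in>?A. \<bar>pmf a x - pmf c x\<bar>)" by (rule tv_superset[OF f]) auto
  also have "\<dots> \<le> (\<Sum>x\<in>?A. \<bar>pmf a x - pmf b x\<bar> + \<bar>pmf b x - pmf c x\<bar>)"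
    by (rule sum_mono) (rule order_trans[OF _ abs_triangle_ineq], simp)
  also have "\<dots> = tv a b + tv b c"
    by (simp add: sum.distrib, subst (1 2) tv_superset[OF f]) auto
  finally show ?thesis .
qed

definition sg :: "'a pmf \<Rightarrow> 'a pmf \<Rightarrow> 'a \<Rightarrow> real" where
  "sg a b x = sgn (pmf a x - pmf b x)"

lemma abs_sg_le: "\<bar>sg a b x\<bar> \<le> 1" unfolding sg_def by (simp add: abs_sgn_eq)

lemma tv_ex: assumes "fs a" "fs b" shows "tv a b = ex a (sg a b) - ex b (sg a b)"
proof -
  let ?A = "set_pmf a \<union> set_pmf b"
  have f: "finite ?A" using assms by simp
  have "tv a b = (\<Sum>x\<in>?A. (pmf a x - pmf b x) * sg a b x)"
    unfolding tv_def sg_def by (rule sum.cong) (auto simp: abs_sgn)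
  also have "\<dots> = ex a (sg a b) - ex b (sg a b)"
    by (simp add: ex_superset[OF f] left_diff_distrib sum_subtractf)
  finally show ?thesis .
qed

lemma ex_diff_le_tv:
  assumes "fs a" "fs b" "\<And>x. x \<in> set_pmf a \<union> set_pmf b \<Longrightarrow> \<bar>f x\<bar> \<le> B"
  shows "ex a f - ex b f \<le> B * tv a b"
proof -
  let ?A = "set_pmf a \<union> set_pmf b"
  have f: "finite ?A" using assms by simp
  have "ex a f - ex b f = (\<Sum>x\<in>?A. (pmf a x - pmf b x) * f x)"
    by (simp add: ex_superset[OF f] left_diff_distrib sum_subtractf)
  also have "\<dots> \<le> (\<Sum>x\<in>?A. \<bar>pmf a x - pmf b x\<bar> * B)"
  proof (rule sum_mono)
    fix x assume x: "x \<in> ?A"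
    have "(pmf a x - pmf b x) * f x \<le> \<bar>(pmf a x - pmf b x) * f x\<bar>" by simp
    also have "\<dots> \<le> \<bar>pmf a x - pmf b x\<bar> * B" unfolding abs_mult
      using assms(3)[OF x] by (intro mult_left_mono) auto
    finally show "(pmf a x - pmf b x) * f x \<le> \<bar>pmf a x - pmf b x\<bar> * B" .
  qed
  also have "\<dots> = B * tv a b" by (simp add: tv_def sum_distrib_left mult.commute)
  finally show ?thesis .
qed

lemma tv_map: assumes "fs a" "fs b" shows "tv (map_pmf g a) (map_pmf g b) \<le> tv a b"
proof -
  let ?s = "sg (map_pmf g a) (map_pmf g b)"
  have "tv (map_pmf g a) (map_pmf g b) = ex a (\<lambda>x. ?s (g x)) - ex b (\<lambda>x. ?s (g x))"
    using assms by (simp add: tv_ex ex_map)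
  also have "\<dots> \<le> 1 * tv a b" by (rule ex_diff_le_tv) (use assms abs_sg_le in auto)
  finally show ?thesis by simp
qed

lemma tv_bind:
  assumes "fs a" "fs b" "\<And>x. x \<in> set_pmf a \<union> set_pmf b \<Longrightarrow> fs (N x)"
  shows "tv (bind_pmf a N) (bind_pmf b N) \<le> tv a b"
proof -
  let ?s = "sg (bind_pmf a N) (bind_pmf b N)"
  have "tv (bind_pmf a N) (bind_pmf b N) = ex a (\<lambda>x. ex (N x) ?s) - ex b (\<lambda>x. ex (N x) ?s)"
    using assms by (simp add: tv_ex ex_bind)
  also have "\<dots> \<le> 1 * tv a b"
  proof (rule ex_diff_le_tv[OF assms(1,2)])
    fix x assume x: "x \<in> set_pmf a \<union> set_pmf b"
    have "\<bar>ex (N x) ?s\<bar> \<le> ex (N x) (\<lambda>y. \<bar>?s y\<bar>)" by (rule ex_abs)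
    also have "\<dots> \<le> 1" using assms(3)[OF x] by (intro ex_le_const) (auto simp: abs_sg_le)
    finally show "\<bar>ex (N x) ?s\<bar> \<le> 1" .
  qed
  finally show ?thesis by simp
qed

lemma tv_bind2:
  assumes "fs a" "\<And>x. x \<in> set_pmf a \<Longrightarrow> fs (N1 x)" "\<And>x. x \<in> set_pmf a \<Longrightarrow> fs (N2 x)"
  shows "tv (bind_pmf a N1) (bind_pmf a N2) \<le> ex a (\<lambda>x. tv (N1 x) (N2 x))"
proof -
  let ?s = "sg (bind_pmf a N1) (bind_pmf a N2)"
  have "tv (bind_pmf a N1) (bind_pmf a N2) = ex a (\<lambda>x. ex (N1 x) ?s - ex (N2 x) ?s)"
    using assms by (simp add: tv_ex ex_bind ex_diff)
  also have "\<dots> \<le> ex a (\<lambda>x. 1 * tv (N1 x) (N2 x))"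
    by (rule ex_mono, rule ex_diff_le_tv) (use assms abs_sg_le in auto)
  finally show ?thesis by simp
qed

definition condS :: "('a \<times> 'b) pmf \<Rightarrow> 'a \<Rightarrow> 'b pmf" where
  "condS W a = map_pmf snd (cond_pmf W {t. fst t = a})"

lemma pmf_condS:
  assumes a: "a \<in> set_pmf (map_pmf fst W)"
  shows "pmf (condS W a) b = pmf W (a, b) / pmf (map_pmf fst W) a"
proof -
  have ne: "set_pmf W \<inter> {t. fst t = a} \<noteq> {}" using a by auto
  let ?C = "cond_pmf W {t. fst t = a}"
  have sC: "set_pmf ?C = set_pmf W \<inter> {t. fst t = a}" using ne by simp
  have "pmf (condS W a) b = measure ?C (snd -` {b} \<inter> set_pmf ?C)"
    unfolding condS_def pmf_map by (simp add: measure_Int_set_pmf)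
  also have "snd -` {b} \<inter> set_pmf ?C = {(a, b)} \<inter> set_pmf ?C" using sC by auto
  also have "measure ?C ({(a, b)} \<inter> set_pmf ?C) = pmf ?C (a, b)"
    by (simp add: measure_Int_set_pmf measure_pmf_single)
  also have "\<dots> = pmf W (a, b) / measure W {t. fst t = a}" using ne by (simp add: pmf_cond)
  also have "measure W {t. fst t = a} = pmf (map_pmf fst W) a"
    by (simp add: pmf_map vimage_def)
  finally show ?thesis .
qed

lemma set_condS: "a \<in> set_pmf (map_pmf fst W) \<Longrightarrow> set_pmf (condS W a) = {b. (a, b) \<in> set_pmf W}"
proof -
  assume a: "a \<in> set_pmf (map_pmf fst W)"
  have ne: "set_pmf W \<inter> {t. fst t = a} \<noteq> {}" using a by auto
  show ?thesis unfolding condS_def using ne by force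
qed

lemma pmf_map_Pair: "pmf (map_pmf (Pair a) X) (a0, b0) = (if a = a0 then pmf X b0 else 0)"
proof -
  have "Pair a -` {(a0, b0)} = (if a = a0 then {b0} else {})" by auto
  then show ?thesis by (simp add: pmf_map measure_pmf_single)
qed

lemma disintegrate:
  assumes "fs W"
  shows "W = bind_pmf (map_pmf fst W) (\<lambda>a. map_pmf (Pair a) (condS W a))"
proof (rule pmf_eqI)
  fix z :: "'a \<times> 'b"
  obtain a0 b0 where z: "z = (a0, b0)" by (cases z)
  have fm: "fs (map_pmf fst W)" using assms by simp
  have "pmf (bind_pmf (map_pmf fst W) (\<lambda>a. map_pmf (Pair a) (condS W a))) z =
        ex (map_pmf fst W) (\<lambda>a. if a = a0 then pmf (condS W a0) b0 else 0)"
    unfolding z pmf_bind_ex[OF fm] pmf_map_Pair by (rule ex_cong) auto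
  also have "\<dots> = pmf (map_pmf fst W) a0 * pmf (condS W a0) b0" using fm by (rule ex_point)
  also have "\<dots> = pmf W z"
  proof (cases "a0 \<in> set_pmf (map_pmf fst W)")
    case True
    then have "pmf (map_pmf fst W) a0 \<noteq> 0" by (simp add: set_pmf_iff del: set_map_pmf)
    then show ?thesis using True by (simp add: pmf_condS z)
  next
    case False
    then have "z \<notin> set_pmf W" using z by force
    from False have "pmf (map_pmf fst W) a0 = 0" by (meson set_pmf_iff)
    then show ?thesis using \<open>z \<notin> set_pmf W\<close> by (simp add: set_pmf_iff)
  qed
  finally show "pmf W z = pmf (bind_pmf (map_pmf fst W) (\<lambda>a. map_pmf (Pair a) (condS W a))) z" by simp
qed

lemma sum_pmf_superset: "finite A \<Longrightarrow> set_pmf p \<subseteq> A \<Longrightarrow> (\<Sum>x\<in>A. pmf p x) = 1"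
proof -
  assume a: "finite A" "set_pmf p \<subseteq> A"
  then have "fs p" by (rule finite_subset[rotated])
  have "ex p (\<lambda>_. 1) = (\<Sum>x\<in>A. pmf p x * 1)" using a by (rule ex_superset)
  then show ?thesis using \<open>fs p\<close> by simp
qed

lemma ex_bernoulli: "0 \<le> t \<Longrightarrow> t \<le> 1 \<Longrightarrow> ex (bernoulli_pmf t) h = t * h True + (1 - t) * h False"
  by (subst ex_superset[of UNIV]) (auto simp: UNIV_bool)

lemma tv_zero_eq: assumes "fs a" "fs b" "tv a b = 0" shows "a = b"
proof (rule pmf_eqI)
  fix x
  show "pmf a x = pmf b x"
  proof (cases "x \<in> set_pmf a \<union> set_pmf b")
    case True
    have "\<forall>y\<in>set_pmf a \<union> set_pmf b. \<bar>pmf a y - pmf b y\<bar> = 0"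
      using assms sum_nonneg_eq_0_iff[of "set_pmf a \<union> set_pmf b" "\<lambda>y. \<bar>pmf a y - pmf b y\<bar>"]
      unfolding tv_def by auto
    then show ?thesis using True by auto
  next
    case False then show ?thesis by (auto simp: set_pmf_iff)
  qed
qed

lemma correction:
  assumes fn: "fs \<nu>" and fp: "fs \<pi>"
  obtains W :: "'b \<Rightarrow> 'b pmf" and w :: "'b \<Rightarrow> real" where
   "bind_pmf \<nu> W = \<pi>" "\<And>b. set_pmf (W b) \<subseteq> set_pmf \<pi> \<union> {b}" "\<And>b. fs (W b)"
   "\<And>b g B. 0 \<le> g b \<Longrightarrow> (\<And>c. c \<in> set_pmf \<pi> \<Longrightarrow> g c \<le> B) \<Longrightarrow> ex (W b) g \<le> g b + B * w b"
   "\<And>b. 0 \<le> w b" "ex \<nu> w \<le> tv \<nu> \<pi>"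
proof -
  let ?A = "set_pmf \<nu> \<union> set_pmf \<pi>"
  have fA: "finite ?A" using assms by simp
  define tp where "tp = (\<Sum>x\<in>?A. max 0 (pmf \<pi> x - pmf \<nu> x))"
  define tn where "tn = (\<Sum>x\<in>?A. max 0 (pmf \<nu> x - pmf \<pi> x))"
  have s1: "(\<Sum>x\<in>?A. pmf \<nu> x) = 1" "(\<Sum>x\<in>?A. pmf \<pi> x) = 1"
    using fA by (auto intro!: sum_pmf_superset)
  have "tp - tn = (\<Sum>x\<in>?A. pmf \<pi> x - pmf \<nu> x)"
    unfolding tp_def tn_def sum_subtractf[symmetric] by (rule sum.cong) auto
  then have tpn: "tp = tn" using s1 by (simp add: sum_subtractf)
  have tvv: "tv \<nu> \<pi> = tp + tn"
    unfolding tv_def tp_def tn_def sum.distrib[symmetric] by (rule sum.cong) auto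
  have tp0: "0 \<le> tp" unfolding tp_def by (rule sum_nonneg) auto
  show ?thesis
  proof (cases "tp = 0")
    case True
    then have "tv \<nu> \<pi> = 0" using tvv tpn by simp
    then have "\<nu> = \<pi>" using tv_zero_eq fn fp by blast
    show ?thesis
      by (rule that[of return_pmf "\<lambda>_. 0"]) (auto simp: \<open>\<nu> = \<pi>\<close> bind_return_pmf' tv_nonneg fp)
  next
    case False
    then have tpp: "0 < tp" using tp0 by simp
    define f where "f x = max 0 (pmf \<pi> x - pmf \<nu> x) / tp" for x
    have f_nn: "\<And>x. 0 \<le> f x" unfolding f_def using tpp by simp
    have f_int: "(\<integral>\<^sup>+x. f x \<partial>count_space UNIV) = 1"
    proof -
      have "(\<integral>\<^sup>+x. ennreal (f x) \<partial>count_space UNIV) = (\<Sum>x\<in>?A. ennreal (f x))"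
        by (rule nn_integral_count_space') (auto simp: f_def set_pmf_iff fn fp)
      also have "\<dots> = ennreal (\<Sum>x\<in>?A. f x)" using f_nn by simp
      also have "(\<Sum>x\<in>?A. f x) = 1" unfolding f_def sum_divide_distrib[symmetric] tp_def[symmetric]
        using tpp by simp
      finally show ?thesis by simp
    qed
    define r where "r = embed_pmf f"
    have pr: "pmf r x = f x" for x unfolding r_def by (rule pmf_embed_pmf[OF f_nn f_int])
    have sr: "set_pmf r \<subseteq> set_pmf \<pi>"
    proof
      fix x assume "x \<in> set_pmf r"
      then have "f x \<noteq> 0" by (simp add: set_pmf_iff pr)
      then have "pmf \<pi> x > pmf \<nu> x" unfolding f_def by (auto simp: max_def split: if_splits)
      then show "x \<in> set_pmf \<pi>" using pmf_nonneg[of \<nu> x] by (auto simp: set_pmf_iff)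
    qed
    have fr: "fs r" using sr fp by (rule finite_subset)
    define \<theta> where "\<theta> b = (if pmf \<nu> b \<le> pmf \<pi> b then 1 else pmf \<pi> b / pmf \<nu> b)" for b
    have th01: "0 \<le> \<theta> b" "\<theta> b \<le> 1" for b unfolding \<theta>_def by (auto simp: divide_le_eq_1)
    define W where "W b = bind_pmf (bernoulli_pmf (\<theta> b)) (\<lambda>k. if k then return_pmf b else r)" for b
    define w where "w b = 1 - \<theta> b" for b
    have fW: "fs (W b)" for b unfolding W_def using fr by (auto simp: set_bind_pmf intro!: finite_UN_I)
    have sW: "set_pmf (W b) \<subseteq> set_pmf \<pi> \<union> {b}" for b
      unfolding W_def using sr by (auto split: if_splits)
    have exW: "ex (W b) g = \<theta> b * g b + (1 - \<theta> b) * ex r g" for b and g :: "'b \<Rightarrow> real"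
      unfolding W_def by (subst ex_bind) (auto simp: ex_bernoulli th01 fr)
    have pW: "pmf (W b) y = \<theta> b * (if b = y then 1 else 0) + (1 - \<theta> b) * pmf r y" for b y
      unfolding W_def by (subst pmf_bind_ex) (auto simp: ex_bernoulli th01)
    show ?thesis
    proof (rule that[of W w])
      show "bind_pmf \<nu> W = \<pi>"
      proof (rule pmf_eqI)
        fix y
        have "pmf (bind_pmf \<nu> W) y = ex \<nu> (\<lambda>b. if b = y then \<theta> y else 0) + ex \<nu> (\<lambda>b. 1 - \<theta> b) * pmf r y"
        proof -
          have "pmf (bind_pmf \<nu> W) y = ex \<nu> (\<lambda>b. (if b = y then \<theta> y else 0) + (1 - \<theta> b) * pmf r y)"
            unfolding pmf_bind_ex[OF fn] by (rule ex_cong) (simp add: pW)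
          then show ?thesis by (simp add: ex_add ex_multc)
        qed
        also have "ex \<nu> (\<lambda>b. if b = y then \<theta> y else 0) = pmf \<nu> y * \<theta> y" using fn by (rule ex_point)
        also have "pmf \<nu> y * \<theta> y = min (pmf \<nu> y) (pmf \<pi> y)" unfolding \<theta>_def by auto
        also have "ex \<nu> (\<lambda>b. 1 - \<theta> b) = tn"
        proof -
          have "ex \<nu> (\<lambda>b. 1 - \<theta> b) = (\<Sum>x\<in>?A. pmf \<nu> x * (1 - \<theta> x))" using fA by (intro ex_superset) auto
          also have "\<dots> = tn" unfolding tn_def
            by (rule sum.cong) (auto simp: \<theta>_def field_simps)
          finally show ?thesis .
        qed
        also have "min (pmf \<nu> y) (pmf \<pi> y) + tn * pmf r y = pmf \<pi> y"
          unfolding pr f_def using tpp tpn by auto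
        finally show "pmf (bind_pmf \<nu> W) y = pmf \<pi> y" .
      qed
    next
      fix b and g :: "'b \<Rightarrow> real" and B :: real assume g0: "0 \<le> g b" and gB: "\<And>c. c \<in> set_pmf \<pi> \<Longrightarrow> g c \<le> B"
      have "ex r g \<le> B" using fr sr gB by (intro ex_le_const) auto
      then have "(1 - \<theta> b) * ex r g \<le> (1 - \<theta> b) * B" using th01 by (intro mult_left_mono) auto
      moreover have "\<theta> b * g b \<le> g b" using th01 g0 by (simp add: mult_left_le_one_le)
      ultimately show "ex (W b) g \<le> g b + B * w b" unfolding exW w_def by (simp add: algebra_simps)
    next
      show "0 \<le> w b" for b unfolding w_def using th01 by simp
    next
      have "ex \<nu> w = (\<Sum>x\<in>?A. pmf \<nu> x * (1 - \<theta> x))" unfolding w_def using fA by (intro ex_superset) auto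
      also have "\<dots> = tn" unfolding tn_def by (rule sum.cong) (auto simp: \<theta>_def field_simps)
      finally show "ex \<nu> w \<le> tv \<nu> \<pi>" using tvv tpn tp0 by simp
    qed (use fW sW in auto)
  qed
qed

definition mix :: "('c \<Rightarrow> 'v pmf) \<Rightarrow> 'c list \<Rightarrow> 'v pmf" where
  "mix G cs = bind_pmf (pmf_of_set {..<length cs}) (\<lambda>i. G (cs ! i))"

lemma set_pmf_of_lessThan: "cs \<noteq> [] \<Longrightarrow> set_pmf (pmf_of_set {..<length cs}) = {..<length cs}"
  by (simp add: lessThan_empty_iff)

lemma sum_list_map_nth: "sum_list (map f cs) = (\<Sum>i<length cs. f (cs ! i))"
  by (simp add: sum_list_sum_nth lessThan_atLeast0)

lemma pmf_mix: "cs \<noteq> [] \<Longrightarrow> pmf (mix G cs) x = sum_list (map (\<lambda>c. pmf (G c) x) cs) / length cs"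
  unfolding mix_def by (subst pmf_bind_pmf_of_set) (auto simp: sum_list_map_nth)

lemma set_mix: "cs \<noteq> [] \<Longrightarrow> set_pmf (mix G cs) = (\<Union>c\<in>set cs. set_pmf (G c))"
  unfolding mix_def by (fastforce simp: in_set_conv_nth set_pmf_of_lessThan)

lemma fs_mix: "cs \<noteq> [] \<Longrightarrow> (\<And>c. c \<in> set cs \<Longrightarrow> fs (G c)) \<Longrightarrow> fs (mix G cs)"
  by (simp add: set_mix)

lemma ex_mix: "cs \<noteq> [] \<Longrightarrow> (\<And>c. c \<in> set cs \<Longrightarrow> fs (G c)) \<Longrightarrow>
  ex (mix G cs) f = sum_list (map (\<lambda>c. ex (G c) f) cs) / length cs"
  unfolding mix_def by (subst ex_bind) (auto simp: ex_pmf_of_set sum_list_map_nth set_pmf_of_lessThan lessThan_empty_iff)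

lemma sum_list_divide_distrib: "sum_list (map (\<lambda>x. f x / c) xs) = sum_list (map f xs) / (c::real)"
  by (induction xs) (simp_all add: add_divide_distrib)

lemma sum_list_concat': "sum_list (map f (concat xss)) = sum_list (map (\<lambda>xs. sum_list (map f xs)) xss)"
  by (induction xss) simp_all

lemma sum_list_map_nth1: "sum_list (map f cs) = (\<Sum>k\<in>{1..length cs}. f (cs ! (k - 1)))"
proof -
  have "(\<Sum>k\<in>{1..length cs}. f (cs ! (k - 1))) = (\<Sum>i<length cs. f (cs ! i))"
    by (rule sum.reindex_bij_witness[of _ Suc "\<lambda>k. k - 1"]) auto
  then show ?thesis by (simp add: sum_list_map_nth)
qed

lemma mix_rows:
  assumes "rws \<noteq> []" "\<And>r. r \<in> set rws \<Longrightarrow> length r = m" "m > 0"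
  shows "bind_pmf (pmf_of_set {1..length rws}) (\<lambda>k. mix G (rws ! (k - 1))) = mix G (concat rws)"
proof (rule pmf_eqI)
  fix x
  have ne: "concat rws \<noteq> []" using assms by (cases rws) auto
  have rne: "\<And>r. r \<in> set rws \<Longrightarrow> r \<noteq> []" using assms by auto
  have lc: "length (concat rws) = length rws * m"
    using assms(2) by (induction rws) auto
  have "pmf (bind_pmf (pmf_of_set {1..length rws}) (\<lambda>k. mix G (rws ! (k - 1)))) x =
     (\<Sum>k\<in>{1..length rws}. pmf (mix G (rws ! (k - 1))) x) / length rws"
    using assms by (subst pmf_bind_pmf_of_set) (auto simp: Suc_le_eq)
  also have "\<dots> = sum_list (map (\<lambda>r. pmf (mix G r) x) rws) / length rws"
    by (simp add: sum_list_map_nth1)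
  also have "sum_list (map (\<lambda>r. pmf (mix G r) x) rws) =
      sum_list (map (\<lambda>r. sum_list (map (\<lambda>c. pmf (G c) x) r) / m) rws)"
    by (rule arg_cong[where f=sum_list], rule map_cong) (auto simp: pmf_mix rne assms(2))
  also have "\<dots> = sum_list (map (\<lambda>c. pmf (G c) x) (concat rws)) / m"
    by (simp add: sum_list_divide_distrib[symmetric] sum_list_concat' o_def)
  finally show "pmf (bind_pmf (pmf_of_set {1..length rws}) (\<lambda>k. mix G (rws ! (k - 1)))) x = pmf (mix G (concat rws)) x"
    unfolding pmf_mix[OF ne] lc by (simp add: mult.commute)
qed

lemma prod_list_pos': "(\<And>x. x \<in> set xs \<Longrightarrow> 0 < x) \<Longrightarrow> 0 < prod_list (xs::real list)"
  by (induction xs) auto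

lemma log_prod_list: "(\<And>x. x \<in> set xs \<Longrightarrow> 0 < x) \<Longrightarrow> log 2 (prod_list xs) = sum_list (map (log 2) xs)"
proof (induction xs)
  case Nil then show ?case by simp
next
  case (Cons x xs)
  have "0 < prod_list xs" using Cons.prems by (intro prod_list_pos') auto
  moreover have "0 < x" using Cons.prems by auto
  ultimately have "log 2 (x * prod_list xs) = log 2 x + log 2 (prod_list xs)"
    by (simp add: log_mult)
  then show ?case using Cons.IH Cons.prems by simp
qed

lemma sum_list_addf: "sum_list (map (\<lambda>c. f c + g c) cs) = sum_list (map f cs) + (sum_list (map g cs) :: real)"
  by (induction cs) (auto simp: algebra_simps)

lemma sum_list_diff_const: "sum_list (map (\<lambda>c. f c - k) cs) = sum_list (map f cs) - real (length cs) * k"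
  by (induction cs) (auto simp: algebra_simps)

lemma map_case_prod_comp: "map h (map (\<lambda>(u, v). f u v) ps) = map (\<lambda>(u, v). h (f u v)) ps"
  by (induction ps) auto

lemma sum_list_case_diff: "sum_list (map (\<lambda>(u, v). f u v - g u v) ps) =
   sum_list (map (\<lambda>(u, v). f u v) ps) - sum_list (map (\<lambda>(u, v). g u v) ps :: real list)"
  by (induction ps) auto

locale sc =
  fixes q :: "'u pmf" and K :: "'u \<Rightarrow> 'v pmf"
  assumes fq: "fs q" and fK: "\<And>u. u \<in> set_pmf q \<Longrightarrow> fs (K u)"
begin

definition "p = bind_pmf q K"
definition "W' = bind_pmf q (\<lambda>u. map_pmf (Pair u) (K u))"
definition "Wj = bind_pmf q (\<lambda>u. map_pmf (\<lambda>v. (v, u)) (K u))"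
definition "I = (\<Sum>z\<in>set_pmf Wj. pmf Wj z * log 2 (pmf Wj z / (pmf p (fst z) * pmf q (snd z))))"
definition "ild u v = log 2 (pmf (K u) v) - log 2 (pmf p v)"
definition "V = ex W' (\<lambda>(u, v). (ild u v - I)^2)"

lemma fp: "fs p" unfolding p_def using fq fK by simp
lemma fW': "fs W'" unfolding W'_def using fq fK by simp

lemma pmf_W': "pmf W' (u, v) = pmf q u * pmf (K u) v"
proof -
  have "pmf W' (u, v) = ex q (\<lambda>u'. if u' = u then pmf (K u) v else 0)"
    unfolding W'_def pmf_bind_ex[OF fq] pmf_map_Pair by (rule ex_cong) auto
  also have "\<dots> = pmf q u * pmf (K u) v" using fq by (rule ex_point)
  finally show ?thesis .
qed

lemma set_W': "set_pmf W' = {(u, v). u \<in> set_pmf q \<and> v \<in> set_pmf (K u)}"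
  unfolding W'_def by auto

lemma Wj_swap: "Wj = map_pmf prod.swap W'"
  unfolding Wj_def W'_def by (simp add: map_bind_pmf pmf.map_comp o_def)

lemma p_pos: "u \<in> set_pmf q \<Longrightarrow> v \<in> set_pmf (K u) \<Longrightarrow> 0 < pmf p v"
proof -
  assume "u \<in> set_pmf q" "v \<in> set_pmf (K u)"
  then have "v \<in> set_pmf p" unfolding p_def by auto
  then show ?thesis by (simp add: pmf_positive)
qed

lemma I_eq: "I = ex W' (\<lambda>(u, v). ild u v)"
proof -
  have "I = ex Wj (\<lambda>z. log 2 (pmf Wj z / (pmf p (fst z) * pmf q (snd z))))"
    unfolding I_def ex_def ..
  also have "\<dots> = ex W' (\<lambda>z. log 2 (pmf Wj (prod.swap z) / (pmf p (snd z) * pmf q (fst z))))"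
    unfolding Wj_swap by (subst ex_map[OF fW']) simp
  also have "\<dots> = ex W' (\<lambda>(u, v). ild u v)"
  proof (rule ex_cong)
    fix z assume z: "z \<in> set_pmf W'"
    obtain u v where uv: "z = (u, v)" by (cases z)
    have u: "u \<in> set_pmf q" and v: "v \<in> set_pmf (K u)" using z uv set_W' by auto
    have "pmf Wj (prod.swap z) = pmf W' z" unfolding Wj_swap by (rule pmf_map_inj') (simp add: inj_def)
    then have "pmf Wj (prod.swap z) / (pmf p (snd z) * pmf q (fst z)) = pmf (K u) v / pmf p v"
      using u v uv pmf_positive[of u q] by (simp add: pmf_W')
    then show "log 2 (pmf Wj (prod.swap z) / (pmf p (snd z) * pmf q (fst z))) = (case z of (u, v) \<Rightarrow> ild u v)"
      using uv u v p_pos[OF u v] pmf_positive[OF v] by (simp add: ild_def log_divide)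
  qed
  finally show ?thesis .
qed

lemma ex_g0: "ex W' (\<lambda>(u, v). ild u v - I) = 0"
proof -
  have "ex W' (\<lambda>(u, v). ild u v - I) = ex W' (\<lambda>z. (case z of (u, v) \<Rightarrow> ild u v) - I)"
    by (rule ex_cong) auto
  also have "\<dots> = 0" using fW' by (simp add: ex_diff I_eq[symmetric])
  finally show ?thesis .
qed

lemma bound:
  fixes n L :: nat and \<gamma> :: real
  assumes n: "n > 0" and L: "L > 0" and \<gamma>: "\<gamma> > 0"
  shows "ex (iid_pmf L (iid_pmf n q)) (\<lambda>cs. tv (mix (chan K) cs) (iid_pmf n p))
     \<le> sqrt (2 powr (n * (I + \<gamma>)) / L) + 2 * V / (n * \<gamma>^2)"
proof -
  define Q where "Q = iid_pmf n q"
  define CB where "CB = iid_pmf L Q"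
  define Xn where "Xn = set_pmf (iid_pmf n p)"
  define a where "a c x = pmf (chan K c) x" for c x
  define \<pi> where "\<pi> x = pmf (iid_pmf n p) x" for x
  define c0 where "c0 = 2 powr (n * (I + \<gamma>))"
  define T where "T x = c0 * \<pi> x" for x
  define a1 where "a1 c x = (if a c x \<le> T x then a c x else 0)" for c x
  define a2 where "a2 c x = (if a c x \<le> T x then 0 else a c x)" for c x
  define m1 where "m1 x = ex Q (\<lambda>c. a1 c x)" for x
  define m2 where "m2 x = ex Q (\<lambda>c. a2 c x)" for x
  have c0: "0 < c0" unfolding c0_def by simp
  have fQ: "fs Q" using fq by (simp add: Q_def)
  have fCB: "fs CB" using fQ by (simp add: CB_def)
  have fX: "finite Xn" using fp by (simp add: Xn_def)
  have chanQ: "bind_pmf Q (chan K) = iid_pmf n p" unfolding Q_def p_def by (rule bind_iid_chan')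
  have setQ: "\<And>c u. c \<in> set_pmf Q \<Longrightarrow> u \<in> set c \<Longrightarrow> u \<in> set_pmf q" unfolding Q_def set_iid by auto
  have fchan: "\<And>c. c \<in> set_pmf Q \<Longrightarrow> fs (chan K c)" using fK setQ by (intro fs_chan) blast
  have schan: "\<And>c. c \<in> set_pmf Q \<Longrightarrow> set_pmf (chan K c) \<subseteq> Xn"
    unfolding Xn_def chanQ[symmetric] by auto
  have setCB: "\<And>cs. cs \<in> set_pmf CB \<Longrightarrow> length cs = L \<and> set cs \<subseteq> set_pmf Q" unfolding CB_def set_iid by auto
  have a_nn: "0 \<le> a c x" for c x by (simp add: a_def)
  have pi_nn: "0 \<le> \<pi> x" for x by (simp add: \<pi>_def)
  have a1_nn: "0 \<le> a1 c x" for c x by (simp add: a1_def a_nn)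
  have a2_nn: "0 \<le> a2 c x" for c x by (simp add: a2_def a_nn)
  have a1T: "a1 c x \<le> T x" for c x unfolding a1_def T_def using c0 pi_nn by auto
  have m2_nn: "0 \<le> m2 x" for x unfolding m2_def by (rule ex_nonneg) (simp add: a2_nn)
  have F1: "ex Q (\<lambda>c. a c x) = \<pi> x" for x
    using pmf_bind_ex[OF fQ, of "chan K" x] chanQ unfolding a_def \<pi>_def by simp
  have F2: "m1 x + m2 x = \<pi> x" for x
  proof -
    have "m1 x + m2 x = ex Q (\<lambda>c. a1 c x + a2 c x)" unfolding m1_def m2_def by (simp add: ex_add)
    also have "\<dots> = ex Q (\<lambda>c. a c x)" by (rule ex_cong) (simp add: a1_def a2_def)
    finally show ?thesis using F1 by simp
  qed
  have tvcs: "tv (mix (chan K) cs) (iid_pmf n p) = (\<Sum>x\<in>Xn. \<bar>sum_list (map (\<lambda>c. a c x) cs) / L - \<pi> x\<bar>)"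
    if cs: "cs \<in> set_pmf CB" for cs
  proof -
    have ne: "cs \<noteq> []" using setCB[OF cs] L by auto
    have "set_pmf (mix (chan K) cs) \<subseteq> Xn" using setCB[OF cs] schan by (auto simp: set_mix[OF ne])
    then have "tv (mix (chan K) cs) (iid_pmf n p) = (\<Sum>x\<in>Xn. \<bar>pmf (mix (chan K) cs) x - pmf (iid_pmf n p) x\<bar>)"
      using fX by (intro tv_superset) (auto simp: Xn_def)
    then show ?thesis using setCB[OF cs] by (simp add: pmf_mix[OF ne] a_def \<pi>_def)
  qed
  have pw: "\<bar>sum_list (map (\<lambda>c. a c x) cs) / L - \<pi> x\<bar> \<le>
      \<bar>sum_list (map (\<lambda>c. a1 c x - m1 x) cs)\<bar> / L + sum_list (map (\<lambda>c. a2 c x) cs) / L + m2 x"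
    if len: "length cs = L" for cs x
  proof -
    have "sum_list (map (\<lambda>c. a c x) cs) = sum_list (map (\<lambda>c. a1 c x + a2 c x) cs)"
      by (rule arg_cong[where f=sum_list], rule map_cong) (auto simp: a1_def a2_def)
    also have "\<dots> = sum_list (map (\<lambda>c. a1 c x - m1 x) cs) + real L * m1 x + sum_list (map (\<lambda>c. a2 c x) cs)"
      by (simp add: sum_list_addf sum_list_diff_const len)
    finally have eq0: "sum_list (map (\<lambda>c. a c x) cs) / L - (m1 x + m2 x) =
       sum_list (map (\<lambda>c. a1 c x - m1 x) cs) / L + sum_list (map (\<lambda>c. a2 c x) cs) / L - m2 x"
      using L by (simp add: field_simps)
    have eq: "sum_list (map (\<lambda>c. a c x) cs) / L - \<pi> x =
       sum_list (map (\<lambda>c. a1 c x - m1 x) cs) / L + sum_list (map (\<lambda>c. a2 c x) cs) / L - m2 x"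
      using eq0 F2[of x] by simp
    have s2: "0 \<le> sum_list (map (\<lambda>c. a2 c x) cs)" by (rule sum_list_nonneg) (auto simp: a2_nn)
    have tri: "\<And>u s m::real. 0 \<le> s \<Longrightarrow> 0 \<le> m \<Longrightarrow> \<bar>u + s - m\<bar> \<le> \<bar>u\<bar> + s + m" by arith
    have s2': "0 \<le> sum_list (map (\<lambda>c. a2 c x) cs) / L" using s2 by simp
    show ?thesis unfolding eq using tri[OF s2' m2_nn[of x], of "sum_list (map (\<lambda>c. a1 c x - m1 x) cs) / L"]
      by (simp add: abs_divide)
  qed
  have E1: "ex CB (\<lambda>cs. \<bar>sum_list (map (\<lambda>c. a1 c x - m1 x) cs)\<bar>) \<le> sqrt (L * (T x * \<pi> x))" for x
  proof -
    have mean0: "ex Q (\<lambda>c. a1 c x - m1 x) = 0" using fQ by (simp add: ex_diff m1_def)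
    have "ex CB (\<lambda>cs. \<bar>sum_list (map (\<lambda>c. a1 c x - m1 x) cs)\<bar>) \<le> sqrt (ex CB (\<lambda>cs. (sum_list (map (\<lambda>c. a1 c x - m1 x) cs))^2))"
      using fCB by (rule ex_abs_sqrt)
    also have "ex CB (\<lambda>cs. (sum_list (map (\<lambda>c. a1 c x - m1 x) cs))^2) = L * ex Q (\<lambda>c. (a1 c x - m1 x)^2)"
      unfolding CB_def using fQ mean0 by (rule ex_iid_sq)
    also have "ex Q (\<lambda>c. (a1 c x - m1 x)^2) \<le> T x * \<pi> x"
    proof -
      have "ex Q (\<lambda>c. (a1 c x - m1 x)^2) = ex Q (\<lambda>c. (a1 c x)^2 - 2 * m1 x * a1 c x + (m1 x)^2)"
        by (rule ex_cong) (simp add: power2_eq_square algebra_simps)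
      also have "\<dots> = ex Q (\<lambda>c. (a1 c x)^2) - (m1 x)^2"
        using fQ by (simp add: ex_add ex_diff ex_cmult m1_def[symmetric] power2_eq_square)
      also have "\<dots> \<le> ex Q (\<lambda>c. (a1 c x)^2)" by simp
      also have "\<dots> \<le> ex Q (\<lambda>c. T x * a1 c x)"
        by (rule ex_mono) (simp add: power2_eq_square mult_right_mono a1T a1_nn)
      also have "\<dots> = T x * m1 x" by (simp add: ex_cmult m1_def)
      also have "\<dots> \<le> T x * \<pi> x" using F2[of x] m2_nn[of x] c0 pi_nn[of x]
        by (intro mult_left_mono) (auto simp: T_def)
      finally show ?thesis .
    qed
    then have "sqrt (L * ex Q (\<lambda>c. (a1 c x - m1 x)^2)) \<le> sqrt (L * (T x * \<pi> x))"
      by (intro real_sqrt_le_mono mult_left_mono) auto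
    finally show ?thesis .
  qed
  have E2: "ex CB (\<lambda>cs. sum_list (map (\<lambda>c. a2 c x) cs)) = L * m2 x" for x
    unfolding CB_def m2_def using fQ by (rule ex_iid_sum)
  have sq: "sqrt (L * (T x * \<pi> x)) / L = sqrt (c0 / L) * \<pi> x" for x
  proof -
    have "sqrt (L * (T x * \<pi> x)) = sqrt (L * c0) * \<pi> x"
      unfolding T_def using pi_nn[of x] by (simp add: real_sqrt_mult power2_eq_square[symmetric] mult.assoc[symmetric])
    moreover have "sqrt (L * c0) = sqrt (c0 / L) * L"
    proof -
      have "sqrt (c0 / L) * L = sqrt (c0 / L) * sqrt (L^2)" by simp
      also have "\<dots> = sqrt (c0 / L * L^2)" by (rule real_sqrt_mult[symmetric])
      also have "c0 / L * L^2 = L * c0" using L by (simp add: power2_eq_square field_simps)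
      finally show ?thesis by simp
    qed
    ultimately show ?thesis using L by simp
  qed
  have tail: "(\<Sum>x\<in>Xn. m2 x) \<le> V / (n * \<gamma>^2)"
  proof -
    define h where "h c x = (if a c x \<le> T x then 0 else 1::real)" for c x
    define g where "g z = (case z of (u, v) \<Rightarrow> ild u v - I)" for z
    have fW'n: "fs (iid_pmf n W')" using fW' by simp
    have "(\<Sum>x\<in>Xn. m2 x) = ex Q (\<lambda>c. \<Sum>x\<in>Xn. a2 c x)" unfolding m2_def by (simp add: ex_sum)
    also have "\<dots> = ex Q (\<lambda>c. ex (chan K c) (h c))"
    proof (rule ex_cong)
      fix c assume c: "c \<in> set_pmf Q"
      have "ex (chan K c) (h c) = (\<Sum>x\<in>Xn. pmf (chan K c) x * h c x)"
        using fX schan[OF c] by (rule ex_superset)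
      also have "\<dots> = (\<Sum>x\<in>Xn. a2 c x)" by (rule sum.cong) (auto simp: h_def a2_def a_def)
      finally show "(\<Sum>x\<in>Xn. a2 c x) = ex (chan K c) (h c)" by simp
    qed
    also have "\<dots> = ex (bind_pmf Q (\<lambda>c. map_pmf (\<lambda>x. (c, x)) (chan K c))) (\<lambda>(c, x). h c x)"
      apply (subst ex_bind[OF fQ])
      apply (simp add: fchan)
      apply (rule ex_cong)
      apply (simp add: ex_map fchan)
      done
    also have "bind_pmf Q (\<lambda>c. map_pmf (\<lambda>x. (c, x)) (chan K c)) =
        map_pmf (\<lambda>ps. (map fst ps, map snd ps)) (iid_pmf n W')"
      unfolding Q_def W'_def by (rule bind_iid_chan)
    also have "ex (map_pmf (\<lambda>ps. (map fst ps, map snd ps)) (iid_pmf n W')) (\<lambda>(c, x). h c x) =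
        ex (iid_pmf n W') (\<lambda>ps. h (map fst ps) (map snd ps))"
      using fW'n by (simp add: ex_map)
    also have "\<dots> \<le> ex (iid_pmf n W') (\<lambda>ps. (sum_list (map g ps))^2 / (n * \<gamma>)^2)"
    proof (rule ex_mono)
      fix ps assume ps: "ps \<in> set_pmf (iid_pmf n W')"
      have lps: "length ps = n" and sps: "set ps \<subseteq> set_pmf W'" using ps by (auto simp: set_iid)
      have uv: "\<And>u v. (u, v) \<in> set ps \<Longrightarrow> u \<in> set_pmf q \<and> v \<in> set_pmf (K u)" using sps set_W' by auto
      show "h (map fst ps) (map snd ps) \<le> (sum_list (map g ps))^2 / (n * \<gamma>)^2"
      proof (cases "a (map fst ps) (map snd ps) \<le> T (map snd ps)")
        case True then show ?thesis by (simp add: h_def)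
      next
        case False
        have ea: "a (map fst ps) (map snd ps) = prod_list (map (\<lambda>(u, v). pmf (K u) v) ps)"
          unfolding a_def using uv fK by (subst pmf_chan) (auto simp: zip_map_fst_snd)
        have ep: "\<pi> (map snd ps) = prod_list (map (\<lambda>(u, v). pmf p v) ps)"
          unfolding \<pi>_def using fp lps by (simp add: pmf_iid o_def split_beta case_prod_unfold)
        have posK: "\<And>z. z \<in> set (map (\<lambda>(u, v). pmf (K u) v) ps) \<Longrightarrow> 0 < z"
          using uv by (auto simp: pmf_positive)
        have posp: "\<And>z. z \<in> set (map (\<lambda>(u, v). pmf p v) ps) \<Longrightarrow> 0 < z"
          using uv p_pos by auto
        have pa: "0 < a (map fst ps) (map snd ps)" unfolding ea by (rule prod_list_pos') (rule posK)
        have ppi: "0 < \<pi> (map snd ps)" unfolding ep by (rule prod_list_pos') (rule posp)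
        have "c0 * \<pi> (map snd ps) < a (map fst ps) (map snd ps)" using False by (simp add: T_def)
        then have "log 2 (c0 * \<pi> (map snd ps)) < log 2 (a (map fst ps) (map snd ps))"
          using c0 ppi pa by simp
        also have "log 2 (c0 * \<pi> (map snd ps)) = n * (I + \<gamma>) + log 2 (\<pi> (map snd ps))"
          using c0 ppi by (simp add: log_mult c0_def)
        finally have "n * (I + \<gamma>) < log 2 (a (map fst ps) (map snd ps)) - log 2 (\<pi> (map snd ps))" by simp
        also have "log 2 (a (map fst ps) (map snd ps)) - log 2 (\<pi> (map snd ps)) =
            sum_list (map (\<lambda>(u, v). ild u v) ps)"
        proof -
          have "log 2 (a (map fst ps) (map snd ps)) = sum_list (map (\<lambda>(u, v). log 2 (pmf (K u) v)) ps)"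
          proof -
            have "log 2 (prod_list (map (\<lambda>(u, v). pmf (K u) v) ps)) = sum_list (map (log 2) (map (\<lambda>(u, v). pmf (K u) v) ps))"
              by (rule log_prod_list) (rule posK)
            then show ?thesis unfolding ea by (simp only: map_case_prod_comp)
          qed
          moreover have "log 2 (\<pi> (map snd ps)) = sum_list (map (\<lambda>(u, v). log 2 (pmf p v)) ps)"
          proof -
            have "log 2 (prod_list (map (\<lambda>(u, v). pmf p v) ps)) = sum_list (map (log 2) (map (\<lambda>(u, v). pmf p v) ps))"
              by (rule log_prod_list) (rule posp)
            then show ?thesis unfolding ep by (simp only: map_case_prod_comp)
          qed
          ultimately show ?thesis
            by (simp add: ild_def sum_list_case_diff)
        qed
        also have "sum_list (map (\<lambda>(u, v). ild u v) ps) = sum_list (map g ps) + n * I"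
          unfolding g_def using lps by (simp add: case_prod_unfold sum_list_diff_const)
        finally have gt: "n * \<gamma> < sum_list (map g ps)" by (simp add: algebra_simps)
        have ng: "0 < n * \<gamma>" using n \<gamma> by simp
        then have "(n * \<gamma>)^2 \<le> (sum_list (map g ps))^2" using gt by (intro power_mono) auto
        then show ?thesis using ng n \<gamma> by (simp add: h_def False le_divide_eq)
      qed
    qed
    also have "\<dots> = ex (iid_pmf n W') (\<lambda>ps. (sum_list (map g ps))^2) / (n * \<gamma>)^2" by (simp add: ex_divc)
    also have "ex (iid_pmf n W') (\<lambda>ps. (sum_list (map g ps))^2) = n * ex W' (\<lambda>z. (g z)^2)"
    proof (rule ex_iid_sq[OF fW'])
      show "ex W' g = 0" using ex_g0 unfolding g_def by simp
    qed
    also have "ex W' (\<lambda>z. (g z)^2) = V" unfolding V_def g_def by (rule ex_cong) (auto simp: split_beta)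
    finally show ?thesis using n \<gamma> by (simp add: power2_eq_square field_simps)
  qed
  have "ex CB (\<lambda>cs. tv (mix (chan K) cs) (iid_pmf n p)) \<le>
     ex CB (\<lambda>cs. \<Sum>x\<in>Xn. \<bar>sum_list (map (\<lambda>c. a1 c x - m1 x) cs)\<bar> / L + sum_list (map (\<lambda>c. a2 c x) cs) / L + m2 x)"
    by (rule ex_mono) (auto simp: tvcs intro!: sum_mono pw dest: setCB)
  also have "\<dots> = (\<Sum>x\<in>Xn. ex CB (\<lambda>cs. \<bar>sum_list (map (\<lambda>c. a1 c x - m1 x) cs)\<bar>) / L
       + ex CB (\<lambda>cs. sum_list (map (\<lambda>c. a2 c x) cs)) / L + m2 x)"
    using fCB by (simp add: ex_sum ex_add ex_divc)
  also have "\<dots> \<le> (\<Sum>x\<in>Xn. sqrt (c0 / L) * \<pi> x + 2 * m2 x)"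
  proof (rule sum_mono)
    fix x
    have "ex CB (\<lambda>cs. \<bar>sum_list (map (\<lambda>c. a1 c x - m1 x) cs)\<bar>) / L \<le> sqrt (L * (T x * \<pi> x)) / L"
      using E1[of x] L by (simp add: divide_right_mono)
    then show "ex CB (\<lambda>cs. \<bar>sum_list (map (\<lambda>c. a1 c x - m1 x) cs)\<bar>) / L
       + ex CB (\<lambda>cs. sum_list (map (\<lambda>c. a2 c x) cs)) / L + m2 x \<le> sqrt (c0 / L) * \<pi> x + 2 * m2 x"
      using L by (simp add: E2 sq)
  qed
  also have "\<dots> = sqrt (c0 / L) * (\<Sum>x\<in>Xn. \<pi> x) + 2 * (\<Sum>x\<in>Xn. m2 x)"
    by (simp add: sum.distrib sum_distrib_left)
  also have "(\<Sum>x\<in>Xn. \<pi> x) = 1" unfolding \<pi>_def Xn_def using fp by (intro sum_pmf_superset) auto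
  finally show ?thesis using tail unfolding CB_def Q_def c0_def by simp
qed

lemma softcov:
  assumes IR: "I < R" and e: "0 < \<epsilon>"
  shows "\<exists>N. \<forall>n\<ge>N. \<forall>L::nat. 2 powr (n * R) \<le> L \<longrightarrow>
     ex (iid_pmf L (iid_pmf n q)) (\<lambda>cs. tv (mix (chan K) cs) (iid_pmf n p)) \<le> \<epsilon>"
proof -
  define \<gamma> where "\<gamma> = (R - I) / 2"
  have g: "0 < \<gamma>" using IR by (simp add: \<gamma>_def)
  have l1: "((\<lambda>n::nat. 2 powr (-(\<gamma>/2) * real n)) \<longlongrightarrow> 0) sequentially" using g by real_asymp
  have l2: "((\<lambda>n::nat. (2 * V / \<gamma>^2) / real n) \<longlongrightarrow> 0) sequentially"
    by (intro tendsto_divide_0[OF tendsto_const] filterlim_at_top_imp_at_infinity filterlim_real_sequentially)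
  have ev: "eventually (\<lambda>n. 2 powr (-(\<gamma>/2) * real n) < \<epsilon>/2 \<and> (2 * V / \<gamma>^2) / real n < \<epsilon>/2 \<and> n \<ge> 1) sequentially"
  proof -
    have "eventually (\<lambda>n. 2 powr (-(\<gamma>/2) * real n) < \<epsilon>/2) sequentially"
      using order_tendstoD(2)[OF l1, of "\<epsilon>/2"] e by simp
    moreover have "eventually (\<lambda>n. (2 * V / \<gamma>^2) / real n < \<epsilon>/2) sequentially"
      using order_tendstoD(2)[OF l2, of "\<epsilon>/2"] e by simp
    moreover have "eventually (\<lambda>n. n \<ge> (1::nat)) sequentially" by (rule eventually_ge_at_top)
    ultimately show ?thesis by eventually_elim auto
  qed
  then obtain N where N: "\<And>n. n \<ge> N \<Longrightarrow> 2 powr (-(\<gamma>/2) * real n) < \<epsilon>/2 \<and> (2 * V / \<gamma>^2) / real n < \<epsilon>/2 \<and> n \<ge> 1"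
    unfolding eventually_sequentially by blast
  show ?thesis
  proof (intro exI allI impI)
    fix n L assume nN: "N \<le> n" and LR: "2 powr (n * R) \<le> real L"
    have n1: "n > 0" using N[OF nN] by simp
    have Lp: "0 < real L" using LR by (rule less_le_trans[rotated]) simp
    then have L0: "L > 0" by simp
    have "sqrt (2 powr (n * (I + \<gamma>)) / L) \<le> sqrt (2 powr (n * (I + \<gamma>)) / 2 powr (n * R))"
      using LR Lp by (intro real_sqrt_le_mono divide_left_mono) auto
    also have "2 powr (n * (I + \<gamma>)) / 2 powr (n * R) = 2 powr (-\<gamma> * n)"
    proof -
      have "n * (I + \<gamma>) - n * R = -\<gamma> * n" by (simp add: \<gamma>_def algebra_simps)
      then show ?thesis by (simp add: powr_diff[symmetric])
    qed
    also have "sqrt (2 powr (-\<gamma> * n)) = 2 powr (-(\<gamma>/2) * n)"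
      using powr_half_sqrt_powr[of 2 "-\<gamma> * n"] by simp
    finally have s1: "sqrt (2 powr (n * (I + \<gamma>)) / L) < \<epsilon>/2" using N[OF nN] by simp
    have s2: "2 * V / (n * \<gamma>^2) < \<epsilon>/2" using N[OF nN] by (simp add: field_simps)
    show "ex (iid_pmf L (iid_pmf n q)) (\<lambda>cs. tv (mix (chan K) cs) (iid_pmf n p)) \<le> \<epsilon>"
      using bound[OF n1 L0 g] s1 s2 by simp
  qed
qed

end

lemma code_law_comp:
  "code_law n Rc \<mu> E (\<lambda>j k. bind_pmf (F0 j k) Wc) =
   bind_pmf (code_law n Rc \<mu> E F0) (\<lambda>(k, x, j, y0). map_pmf (\<lambda>y. (k, x, j, y)) (Wc y0))"
  unfolding code_law_def by (simp add: bind_assoc_pmf bind_return_pmf map_pmf_def)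

lemma code_law_out:
  "map_pmf (\<lambda>(k, x, j, y). y) (bind_pmf L0 (\<lambda>(k, x, j, y0). map_pmf (\<lambda>y. (k, x, j, y)) (Wc y0))) =
   bind_pmf (map_pmf (\<lambda>(k, x, j, y). y) L0) Wc"
  by (simp add: map_bind_pmf bind_map_pmf pmf.map_comp o_def split_beta map_pmf_def[symmetric])

lemma code_law_split:
  "code_law n Rc \<mu> E F0 = bind_pmf (pmf_of_set (idx_set n Rc)) (\<lambda>k. map_pmf (\<lambda>(x, j, y). (k, x, j, y))
      (bind_pmf (iid_pmf n \<mu>) (\<lambda>x. bind_pmf (E k x) (\<lambda>j. map_pmf (\<lambda>y. (x, j, y)) (F0 j k)))))"
  unfolding code_law_def by (simp add: map_bind_pmf pmf.map_comp o_def map_pmf_def[symmetric])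


lemma idx_set_card: "1 \<le> nat \<lceil>2 powr (real n * R)\<rceil>"
proof -
  have "0 < 2 powr (real n * R)" by simp
  then have "0 < \<lceil>2 powr (real n * R)\<rceil>" by simp
  then show ?thesis by linarith
qed

lemma idx_set_ne: "idx_set n R \<noteq> {}" "finite (idx_set n R)"
  unfolding idx_set_def using idx_set_card[of n R] by auto

lemma idx_set_ge: "2 powr (real n * R) \<le> real (nat \<lceil>2 powr (real n * R)\<rceil>)"
proof -
  have "0 < 2 powr (real n * R)" by simp
  then have "0 \<le> \<lceil>2 powr (real n * R)\<rceil>" using le_of_int_ceiling[of "2 powr (real n * R)"] by linarith
  then have "real (nat \<lceil>2 powr (real n * R)\<rceil>) = of_int \<lceil>2 powr (real n * R)\<rceil>" by simp
  then show ?thesis using le_of_int_ceiling by simp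
qed

lemma fs_finite_type: "fs (p :: 'b::finite pmf)"
  by (rule finite_subset[OF subset_UNIV]) simp

lemma rho_n_nonneg: "(\<And>x y. 0 \<le> \<rho> x y) \<Longrightarrow> 0 \<le> rho_n \<rho> n xs ys"
  unfolding rho_n_def by (auto intro!: sum_list_nonneg divide_nonneg_nonneg)

lemma rho_n_le: assumes "\<And>x y. \<rho> x y \<le> B" "\<And>x y. 0 \<le> \<rho> x y" "n > 0" "length ys = n"
  shows "rho_n \<rho> n xs ys \<le> B"
proof -
  have "sum_list (map2 \<rho> xs ys) \<le> sum_list (map (\<lambda>_. B) (zip xs ys))"
    by (rule sum_list_mono) (auto simp: assms(1) split_beta)
  also have "\<dots> = length (zip xs ys) * B" by (simp add: sum_list_triv)
  also have "\<dots> \<le> n * B"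
  proof -
    have "0 \<le> B" using assms(1)[of undefined undefined] assms(2)[of undefined undefined] by linarith
    then show ?thesis using assms(4) by (intro mult_right_mono) auto
  qed
  finally show ?thesis unfolding rho_n_def using assms(3) by (simp add: field_simps)
qed

locale ach =
  fixes q :: "nat pmf" and KX KY :: "nat \<Rightarrow> 'a::finite pmf" and \<rho> :: "'a \<Rightarrow> 'a \<Rightarrow> real" and B :: real
  assumes fq: "fs q" and \<rho>0: "\<And>x y. 0 \<le> \<rho> x y" and \<rho>B: "\<And>x y. \<rho> x y \<le> B"
begin

definition "K u = pair_pmf (KX u) (KY u)"
definition "\<mu>0 = bind_pmf q KX"
definition "\<psi>0 = bind_pmf q KY"
definition "PXY = bind_pmf q K"
definition "JX r = bind_pmf (pmf_of_set {..<length r}) (\<lambda>i. map_pmf (\<lambda>x. (x, i)) (chan KX (r ! i)))"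
definition "Enc cb k x = (if k \<in> {1..length cb} \<and> x \<in> set_pmf (map_pmf fst (JX (cb ! (k - 1))))
      then map_pmf Suc (condS (JX (cb ! (k - 1))) x) else return_pmf 1)"
definition "Dec0 n cb j k = (if k \<in> {1..length cb} \<and> j \<in> {1..length (cb ! (k - 1))}
      then chan KY (cb ! (k - 1) ! (j - 1)) else return_pmf (replicate n undefined))"
definition "G n cb k x = bind_pmf (Enc cb k x) (\<lambda>j. map_pmf (\<lambda>y. (x, j, y)) (Dec0 n cb j k))"

lemma fs_chanX: "fs (chan KX c)" by (rule fs_chan) (rule fs_finite_type)
lemma fs_chanY: "fs (chan KY c)" by (rule fs_chan) (rule fs_finite_type)
lemma fs_chanK: "fs (chan K c)" by (rule fs_chan) (rule fs_finite_type)

lemma JX_fst: "r \<noteq> [] \<Longrightarrow> map_pmf fst (JX r) = mix (chan KX) r"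
  unfolding JX_def mix_def by (simp add: map_bind_pmf pmf.map_comp o_def)

lemma fs_JX: "r \<noteq> [] \<Longrightarrow> fs (JX r)"
  unfolding JX_def by (auto simp: set_pmf_of_lessThan fs_chanX)

lemma ideal_row:
  assumes k: "k \<in> {1..length cb}" and r: "cb ! (k - 1) = r" and ne: "r \<noteq> []"
  shows "bind_pmf (map_pmf fst (JX r)) (G n cb k) =
    bind_pmf (pmf_of_set {..<length r}) (\<lambda>i. map_pmf (\<lambda>(x, y). (x, Suc i, y)) (pair_pmf (chan KX (r ! i)) (chan KY (r ! i))))"
proof -
  have "bind_pmf (map_pmf fst (JX r)) (G n cb k) =
     bind_pmf (map_pmf fst (JX r)) (\<lambda>x. bind_pmf (map_pmf (Pair x) (condS (JX r) x))
        (\<lambda>(x', i). map_pmf (\<lambda>y. (x', Suc i, y)) (Dec0 n cb (Suc i) k)))"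
    by (rule bind_pmf_cong[OF refl]) (use k r in \<open>simp add: G_def Enc_def bind_map_pmf\<close>)
  also have "\<dots> = bind_pmf (JX r) (\<lambda>(x, i). map_pmf (\<lambda>y. (x, Suc i, y)) (Dec0 n cb (Suc i) k))"
    by (subst (2) disintegrate[OF fs_JX[OF ne]]) (simp add: bind_assoc_pmf)
  also have "\<dots> = bind_pmf (pmf_of_set {..<length r}) (\<lambda>i. bind_pmf (chan KX (r ! i)) (\<lambda>x. map_pmf (\<lambda>y. (x, Suc i, y)) (Dec0 n cb (Suc i) k)))"
    unfolding JX_def by (simp add: bind_assoc_pmf bind_map_pmf)
  also have "\<dots> = bind_pmf (pmf_of_set {..<length r}) (\<lambda>i. map_pmf (\<lambda>(x, y). (x, Suc i, y)) (pair_pmf (chan KX (r ! i)) (chan KY (r ! i))))"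
  proof (rule bind_pmf_cong[OF refl])
    fix i assume "i \<in> set_pmf (pmf_of_set {..<length r})"
    then have i: "i < length r" using ne by (simp add: set_pmf_of_lessThan)
    then have "Dec0 n cb (Suc i) k = chan KY (r ! i)" using k r by (simp add: Dec0_def)
    then show "bind_pmf (chan KX (r ! i)) (\<lambda>x. map_pmf (\<lambda>y. (x, Suc i, y)) (Dec0 n cb (Suc i) k)) =
        map_pmf (\<lambda>(x, y). (x, Suc i, y)) (pair_pmf (chan KX (r ! i)) (chan KY (r ! i)))"
      by (simp add: pair_pmf_def map_bind_pmf map_pmf_def bind_assoc_pmf bind_return_pmf)
  qed
  finally show ?thesis .
qed


definition "cb_ok n M Mc cb \<longleftrightarrow> length cb = Mc \<and>
   (\<forall>r\<in>set cb. length r = M \<and> (\<forall>c\<in>set r. length c = n \<and> set c \<subseteq> set_pmf q))"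

lemma set_Enc:
  assumes ok: "cb_ok n M Mc cb" and M: "M > 0"
  shows "set_pmf (Enc cb k x) \<subseteq> {1..M}"
proof (cases "k \<in> {1..length cb} \<and> x \<in> set_pmf (map_pmf fst (JX (cb ! (k - 1))))")
  case True
  let ?r = "cb ! (k - 1)"
  have r: "?r \<in> set cb" using True by auto
  then have lr: "length ?r = M" using ok by (auto simp: cb_ok_def)
  then have ne: "?r \<noteq> []" using M by auto
  have "set_pmf (condS (JX ?r) x) \<subseteq> {..<M}"
    using True lr ne by (auto simp: set_condS JX_def set_pmf_of_lessThan)
  then show ?thesis using True by (auto simp: Enc_def)
next
  case False then show ?thesis using M by (auto simp: Enc_def)
qed

lemma fs_Enc: "cb_ok n M Mc cb \<Longrightarrow> M > 0 \<Longrightarrow> fs (Enc cb k x)"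
  by (rule finite_subset[OF set_Enc]) auto

lemma set_Dec0: "cb_ok n M Mc cb \<Longrightarrow> y \<in> set_pmf (Dec0 n cb j k) \<Longrightarrow> length y = n"
proof (cases "k \<in> {1..length cb} \<and> j \<in> {1..length (cb ! (k - 1))}")
  case True
  assume ok: "cb_ok n M Mc cb" and y: "y \<in> set_pmf (Dec0 n cb j k)"
  have r: "cb ! (k - 1) \<in> set cb" using True by auto
  have c: "cb ! (k - 1) ! (j - 1) \<in> set (cb ! (k - 1))" using True by auto
  have "length (cb ! (k - 1) ! (j - 1)) = n" using ok r c by (auto simp: cb_ok_def)
  then show ?thesis using y True by (auto simp: Dec0_def dest!: length_chan)
next
  case False
  assume "y \<in> set_pmf (Dec0 n cb j k)"
  then show ?thesis using False by (auto simp: Dec0_def)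
qed

lemma fs_Dec0: "fs (Dec0 n cb j k)"
  unfolding Dec0_def by (auto simp: fs_chanY)

lemma fs_G: "cb_ok n M Mc cb \<Longrightarrow> M > 0 \<Longrightarrow> fs (G n cb k x)"
  unfolding G_def using fs_Enc fs_Dec0 by (auto intro!: finite_UN_I)

lemma fs_iid_fin: "fs (iid_pmf n (p :: 'b::finite pmf))" by (rule fs_iid) (rule fs_finite_type)

lemma fs_code_law:
  assumes "\<And>k x. fs (E k x)" "\<And>j k. fs (F j k)"
  shows "fs (code_law n Rc (p :: 'b::finite pmf) E F)"
  unfolding code_law_def using assms fs_iid_fin[of n p] idx_set_ne[of n Rc]
  by (auto intro!: finite_UN_I simp: idx_set_def)


definition "fD n c = ex (pair_pmf (chan KX c) (chan KY c)) (\<lambda>(x, y). rho_n \<rho> n x y)"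
definition "tX n r = tv (mix (chan KX) r) (iid_pmf n \<mu>0)"
definition "tXY n cs = tv (mix (chan K) cs) (iid_pmf n PXY)"
definition "\<Phi> n cb = sum_list (map (\<lambda>r. sum_list (map (fD n) r) / length r) cb) / length cb
   + 2 * B * (sum_list (map (tX n) cb) / length cb) + B * tXY n (concat cb)"

lemma B0: "0 \<le> B" using \<rho>0[of undefined undefined] \<rho>B[of undefined undefined] by linarith

lemma ex_U_rows: "cb \<noteq> [] \<Longrightarrow> ex (pmf_of_set {1..length cb}) (\<lambda>k. g (cb ! (k - 1))) = sum_list (map g cb) / length cb"
proof -
  assume "cb \<noteq> []"
  then have "{1..length cb} \<noteq> {}" by (cases cb) auto
  then show ?thesis by (simp add: ex_pmf_of_set sum_list_map_nth1)
qed

lemma code_good: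
  assumes n: "n > 0" and M: "M > 0" and Mc: "Mc > 0" and ok: "cb_ok n M Mc cb"
    and IR: "idx_set n R = {1..M}" and IRc: "idx_set n Rc = {1..Mc}"
  shows "\<exists>E F. is_code n R Rc E F \<and>
     measure_pmf.expectation (code_law n Rc \<mu>0 E F) (\<lambda>(k, x, j, y). rho_n \<rho> n x y) \<le> \<Phi> n cb \<and>
     map_pmf (\<lambda>(k, x, j, y). y) (code_law n Rc \<mu>0 E F) = iid_pmf n \<psi>0"
proof -
  define E where "E = Enc cb"
  define L0 where "L0 = code_law n Rc \<mu>0 E (Dec0 n cb)"
  define \<nu> where "\<nu> = map_pmf (\<lambda>(k, x, j, y). y) L0"
  define \<pi> where "\<pi> = iid_pmf n \<psi>0"
  define U where "U = pmf_of_set {1..Mc}"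
  have lcb: "length cb = Mc" using ok by (simp add: cb_ok_def)
  have cbne: "cb \<noteq> []" using lcb Mc by auto
  have rows: "\<And>k. k \<in> {1..Mc} \<Longrightarrow> cb ! (k - 1) \<in> set cb" using lcb by auto
  have lrow: "\<And>r. r \<in> set cb \<Longrightarrow> length r = M" using ok by (simp add: cb_ok_def)
  have rne: "\<And>r. r \<in> set cb \<Longrightarrow> r \<noteq> []" using lrow M by fastforce
  have fE: "\<And>k x. fs (E k x)" unfolding E_def using ok M by (rule fs_Enc)
  have fL0: "fs L0" unfolding L0_def using fE fs_Dec0 by (rule fs_code_law)
  have f\<nu>: "fs \<nu>" using fL0 by (simp add: \<nu>_def)
  have f\<pi>: "fs \<pi>" by (simp add: \<pi>_def fs_iid_fin)
  obtain Wc w where Wc1: "bind_pmf \<nu> Wc = \<pi>" and Wc2: "\<And>b. set_pmf (Wc b) \<subseteq> set_pmf \<pi> \<union> {b}"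
    and Wc3: "\<And>b. fs (Wc b)"
    and Wc4: "\<And>b g B. 0 \<le> g b \<Longrightarrow> (\<And>c. c \<in> set_pmf \<pi> \<Longrightarrow> g c \<le> B) \<Longrightarrow> ex (Wc b) g \<le> g b + B * w b"
    and Wc5: "\<And>b. 0 \<le> w b" and Wc6: "ex \<nu> w \<le> tv \<nu> \<pi>"
    using correction[OF f\<nu> f\<pi>] by blast
  define F where "F j k = bind_pmf (Dec0 n cb j k) Wc" for j k
  have CL: "code_law n Rc \<mu>0 E F = bind_pmf L0 (\<lambda>(k, x, j, y0). map_pmf (\<lambda>y. (k, x, j, y)) (Wc y0))"
    unfolding F_def L0_def by (rule code_law_comp)
  have fCL: "fs (code_law n Rc \<mu>0 E F)" unfolding CL using fL0 Wc3 by (auto intro!: finite_UN_I)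
  have code: "is_code n R Rc E F"
    unfolding is_code_def
  proof (intro conjI ballI allI impI)
    fix k x show "set_pmf (E k x) \<subseteq> idx_set n R" unfolding IR E_def using ok M by (rule set_Enc)
  next
    fix j k
    show "set_pmf (F j k) \<subseteq> {ys. length ys = n}"
    proof
      fix y assume "y \<in> set_pmf (F j k)"
      then obtain y0 where y0: "y0 \<in> set_pmf (Dec0 n cb j k)" and y: "y \<in> set_pmf (Wc y0)"
        by (auto simp: F_def)
      have "length y0 = n" using ok y0 by (rule set_Dec0)
      moreover have "y \<in> set_pmf \<pi> \<union> {y0}" using Wc2 y by blast
      ultimately show "y \<in> {ys. length ys = n}" by (auto simp: \<pi>_def set_iid)
    qed
  qed
  have out: "map_pmf (\<lambda>(k, x, j, y). y) (code_law n Rc \<mu>0 E F) = iid_pmf n \<psi>0"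
    unfolding CL code_law_out \<nu>_def[symmetric] Wc1 \<pi>_def ..
  have dist: "ex (code_law n Rc \<mu>0 E F) (\<lambda>(k, x, j, y). rho_n \<rho> n x y) \<le> \<Phi> n cb"
  proof -
    define r where "r k = cb ! (k - 1)" for k
    define rl where "rl k = bind_pmf (iid_pmf n \<mu>0) (G n cb k)" for k
    define ideal where "ideal k = bind_pmf (map_pmf fst (JX (r k))) (G n cb k)" for k
    define hd where "hd = (\<lambda>(x::'a list, j::nat, y::'a list). rho_n \<rho> n x y)"
    have fU: "fs U" and sU: "set_pmf U = {1..Mc}" using Mc by (auto simp: U_def)
    have rk: "\<And>k. k \<in> set_pmf U \<Longrightarrow> r k \<in> set cb" using rows sU by (simp add: r_def)
    have fG: "\<And>k x. fs (G n cb k x)" using ok M by (rule fs_G)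
    have fmu: "fs (iid_pmf n \<mu>0)" by (rule fs_iid_fin)
    have fJ: "\<And>k. k \<in> set_pmf U \<Longrightarrow> fs (map_pmf fst (JX (r k)))"
      using fs_JX rk rne by simp
    have frl: "\<And>k. fs (rl k)" unfolding rl_def using fmu fG by (auto intro!: finite_UN_I)
    have fJX: "\<And>k. k \<in> set_pmf U \<Longrightarrow> fs (JX (r k))" using fs_JX rk rne by blast
    have fideal: "\<And>k. k \<in> set_pmf U \<Longrightarrow> fs (ideal k)" unfolding ideal_def using fJX fG by (auto intro!: finite_UN_I)
    have L0eq: "L0 = bind_pmf U (\<lambda>k. map_pmf (\<lambda>(x, j, y). (k, x, j, y)) (rl k))"
      unfolding L0_def code_law_split IRc U_def rl_def G_def E_def ..
    have hdB: "\<And>k x. 0 \<le> ex (G n cb k x) hd \<and> ex (G n cb k x) hd \<le> B"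
    proof -
      fix k x
      have "\<And>z. z \<in> set_pmf (G n cb k x) \<Longrightarrow> 0 \<le> hd z \<and> hd z \<le> B"
        using set_Dec0[OF ok] rho_n_nonneg[of \<rho>, OF \<rho>0] rho_n_le[of \<rho> B, OF \<rho>B \<rho>0 n]
        by (auto simp: G_def hd_def)
      then show "0 \<le> ex (G n cb k x) hd \<and> ex (G n cb k x) hd \<le> B"
        using fG by (auto intro!: ex_nonneg ex_le_const)
    qed
    have tvk: "tv (rl k) (ideal k) \<le> tX n (r k)" if k: "k \<in> set_pmf U" for k
    proof -
      have "tv (rl k) (ideal k) \<le> tv (iid_pmf n \<mu>0) (map_pmf fst (JX (r k)))"
        unfolding rl_def ideal_def using fmu fJ[OF k] fG by (intro tv_bind) auto
      also have "\<dots> = tX n (r k)" unfolding tX_def using rk[OF k] rne by (simp add: JX_fst tv_sym)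
      finally show ?thesis .
    qed
    have idealD: "ex (ideal k) hd = sum_list (map (fD n) (r k)) / M" if k: "k \<in> set_pmf U" for k
    proof -
      have kk: "k \<in> {1..length cb}" using k sU lcb by simp
      have ne: "r k \<noteq> []" using rk[OF k] rne by simp
      have lr: "length (r k) = M" using rk[OF k] lrow by simp
      have "ex (ideal k) hd = ex (pmf_of_set {..<length (r k)}) (\<lambda>i. ex (map_pmf (\<lambda>(x, y). (x, Suc i, y))
           (pair_pmf (chan KX (r k ! i)) (chan KY (r k ! i)))) hd)"
        unfolding ideal_def ideal_row[OF kk r_def[symmetric] ne]
        by (subst ex_bind) (auto simp: set_pmf_of_lessThan[OF ne] fs_chanX fs_chanY)
      also have "\<dots> = ex (pmf_of_set {..<length (r k)}) (\<lambda>i. fD n (r k ! i))"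
        by (rule ex_cong) (simp add: ex_map fs_chanX fs_chanY fD_def hd_def case_prod_unfold)
      also have "\<dots> = sum_list (map (fD n) (r k)) / M"
        using ne lr M by (simp add: ex_pmf_of_set sum_list_map_nth lessThan_empty_iff)
      finally show ?thesis .
    qed
    have rlD: "ex (rl k) hd \<le> sum_list (map (fD n) (r k)) / M + B * tX n (r k)" if k: "k \<in> set_pmf U" for k
    proof -
      have "ex (rl k) hd - ex (ideal k) hd \<le> B * tv (iid_pmf n \<mu>0) (map_pmf fst (JX (r k)))"
        unfolding rl_def ideal_def
        apply (subst (1 2) ex_bind)
        using fmu fJ[OF k] fG apply auto[4]
        apply (rule ex_diff_le_tv[OF fmu fJ[OF k]])
        using hdB by (simp add: abs_le_iff)
      also have "tv (iid_pmf n \<mu>0) (map_pmf fst (JX (r k))) = tX n (r k)"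
        unfolding tX_def using rk[OF k] rne by (simp add: JX_fst tv_sym)
      finally show ?thesis using idealD[OF k] by simp
    qed
    have D0: "ex L0 (\<lambda>(k, x, j, y0). rho_n \<rho> n x y0) \<le>
        sum_list (map (\<lambda>r. sum_list (map (fD n) r) / length r + B * tX n r) cb) / Mc"
    proof -
      have "ex L0 (\<lambda>(k, x, j, y0). rho_n \<rho> n x y0) = ex U (\<lambda>k. ex (rl k) hd)"
        unfolding L0eq using fU frl by (subst ex_bind) (auto simp: ex_map hd_def split_beta intro!: ex_cong)
      also have "\<dots> \<le> ex U (\<lambda>k. (\<lambda>r. sum_list (map (fD n) r) / length r + B * tX n r) (cb ! (k - 1)))"
      proof (rule ex_mono)
        fix k assume k: "k \<in> set_pmf U"
        have "length (r k) = M" using rk[OF k] lrow by simp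
        then show "ex (rl k) hd \<le> (\<lambda>r. sum_list (map (fD n) r) / length r + B * tX n r) (cb ! (k - 1))"
          using rlD[OF k] by (simp add: r_def)
      qed
      also have "\<dots> = sum_list (map (\<lambda>r. sum_list (map (fD n) r) / length r + B * tX n r) cb) / Mc"
        unfolding U_def lcb[symmetric] by (rule ex_U_rows[OF cbne])
      finally show ?thesis .
    qed
    define \<nu>I where "\<nu>I = bind_pmf U (\<lambda>k. mix (chan KY) (r k))"
    have KYeq: "(\<lambda>u. map_pmf snd (K u)) = KY" by (simp add: K_def map_snd_pair_pmf)
    have mixY: "mix (chan KY) cs = map_pmf (map snd) (mix (chan K) cs)" for cs
      unfolding mix_def by (simp add: map_bind_pmf chan_map KYeq)
    have fmixK: "fs (mix (chan K) (concat cb))"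
    proof (rule fs_mix)
      show "concat cb \<noteq> []" using cbne rne by (cases cb) auto
    qed (rule fs_chanK)
    have fPXY: "fs (iid_pmf n PXY)" by (rule fs_iid_fin)
    have \<pi>eq: "\<pi> = map_pmf (map snd) (iid_pmf n PXY)"
      unfolding \<pi>_def iid_map PXY_def \<psi>0_def by (simp add: map_bind_pmf KYeq)
    have \<nu>Ieq: "\<nu>I = mix (chan KY) (concat cb)"
      unfolding \<nu>I_def U_def r_def lcb[symmetric] using cbne lrow M by (rule mix_rows)
    have f\<nu>I: "fs \<nu>I" unfolding \<nu>Ieq mixY using fmixK by simp
    have \<nu>eq: "\<nu> = bind_pmf U (\<lambda>k. map_pmf (\<lambda>(x, j, y). y) (rl k))"
      unfolding \<nu>_def L0eq by (simp add: map_bind_pmf pmf.map_comp o_def case_prod_unfold)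
    have mixY2: "mix (chan KY) (r k) = map_pmf (\<lambda>(x, j, y). y) (ideal k)" if k: "k \<in> set_pmf U" for k
    proof -
      have kk: "k \<in> {1..length cb}" using k sU lcb by simp
      have ne: "r k \<noteq> []" using rk[OF k] rne by simp
      show ?thesis
        unfolding ideal_def ideal_row[OF kk r_def[symmetric] ne] mix_def
        by (simp add: map_bind_pmf pmf.map_comp o_def case_prod_unfold)
           (simp add: snd_def[symmetric] map_snd_pair_pmf)
    qed
    have TV1: "tv \<nu> \<nu>I \<le> sum_list (map (tX n) cb) / Mc"
    proof -
      have "tv \<nu> \<nu>I \<le> ex U (\<lambda>k. tv (map_pmf (\<lambda>(x, j, y). y) (rl k)) (mix (chan KY) (r k)))"
        unfolding \<nu>eq \<nu>I_def using fU frl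
        by (intro tv_bind2) (auto intro!: fs_mix fs_chanY simp: rne rk)
      also have "\<dots> \<le> ex U (\<lambda>k. tX n (cb ! (k - 1)))"
      proof (rule ex_mono)
        fix k assume k: "k \<in> set_pmf U"
        have "tv (map_pmf (\<lambda>(x, j, y). y) (rl k)) (mix (chan KY) (r k)) \<le> tv (rl k) (ideal k)"
          unfolding mixY2[OF k] using frl fideal[OF k] by (rule tv_map)
        then show "tv (map_pmf (\<lambda>(x, j, y). y) (rl k)) (mix (chan KY) (r k)) \<le> tX n (cb ! (k - 1))"
          using tvk[OF k] by (simp add: r_def)
      qed
      also have "\<dots> = sum_list (map (tX n) cb) / Mc"
        unfolding U_def lcb[symmetric] by (rule ex_U_rows[OF cbne])
      finally show ?thesis .
    qed
    have TV2: "tv \<nu>I \<pi> \<le> tXY n (concat cb)"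
      unfolding \<nu>Ieq mixY \<pi>eq tXY_def using fmixK fPXY by (rule tv_map)
    have TV: "tv \<nu> \<pi> \<le> sum_list (map (tX n) cb) / Mc + tXY n (concat cb)"
      using tv_triangle[OF f\<nu> f\<nu>I f\<pi>] TV1 TV2 by linarith
    have "ex (code_law n Rc \<mu>0 E F) (\<lambda>(k, x, j, y). rho_n \<rho> n x y) =
        ex L0 (\<lambda>(k, x, j, y0). ex (Wc y0) (\<lambda>y. rho_n \<rho> n x y))"
      unfolding CL using fL0 Wc3 by (subst ex_bind) (auto simp: ex_map split_beta intro!: ex_cong)
    also have "\<dots> \<le> ex L0 (\<lambda>(k, x, j, y0). rho_n \<rho> n x y0 + B * w y0)"
    proof (rule ex_mono)
      fix z assume "z \<in> set_pmf L0"
      obtain k x j y0 where z: "z = (k, x, j, y0)" by (cases z) auto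
      have "ex (Wc y0) (\<lambda>y. rho_n \<rho> n x y) \<le> rho_n \<rho> n x y0 + B * w y0"
        by (rule Wc4) (auto simp: rho_n_nonneg[of \<rho>, OF \<rho>0] \<pi>_def set_iid intro!: rho_n_le[of \<rho> B, OF \<rho>B \<rho>0 n])
      then show "(\<lambda>(k, x, j, y0). ex (Wc y0) (\<lambda>y. rho_n \<rho> n x y)) z \<le> (\<lambda>(k, x, j, y0). rho_n \<rho> n x y0 + B * w y0) z"
        by (simp add: z)
    qed
    also have "\<dots> = ex L0 (\<lambda>(k, x, j, y0). rho_n \<rho> n x y0) + B * ex \<nu> w"
    proof -
      have "ex L0 (\<lambda>(k, x, j, y0). rho_n \<rho> n x y0 + B * w y0) =
          ex L0 (\<lambda>z. (\<lambda>(k, x, j, y0). rho_n \<rho> n x y0) z + B * w (snd (snd (snd z))))"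
        by (rule ex_cong) auto
      then show ?thesis unfolding \<nu>_def using fL0 by (simp add: ex_map ex_add ex_cmult case_prod_unfold)
    qed
    also have "\<dots> \<le> sum_list (map (\<lambda>r. sum_list (map (fD n) r) / length r + B * tX n r) cb) / Mc
        + B * (sum_list (map (tX n) cb) / Mc + tXY n (concat cb))"
      using D0 Wc6 TV B0 by (intro add_mono mult_left_mono) auto
    also have "\<dots> = \<Phi> n cb"
      unfolding \<Phi>_def lcb by (simp add: sum_list_addf sum_list_const_mult add_divide_distrib algebra_simps)
    finally show ?thesis .
  qed
  show ?thesis
    by (intro exI[of _ E] exI[of _ F]) (simp add: ex_eq_integral[OF fCL] code out dist)
qed


lemma fD_avg: "n > 0 \<Longrightarrow> ex (iid_pmf n q) (fD n) = ex PXY (\<lambda>(x, y). \<rho> x y)"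
proof -
  assume n: "n > 0"
  have fQ: "fs (iid_pmf n q)" using fq by simp
  have "ex (iid_pmf n q) (fD n) = ex (iid_pmf n q) (\<lambda>c. ex (chan K c) (\<lambda>ps. rho_n \<rho> n (map fst ps) (map snd ps)))"
  proof (rule ex_cong)
    fix c
    have "pair_pmf (chan KX c) (chan KY c) = map_pmf (\<lambda>ps. (map fst ps, map snd ps)) (chan K c)"
      by (rule chan_pair[symmetric]) (simp add: K_def)
    then show "fD n c = ex (chan K c) (\<lambda>ps. rho_n \<rho> n (map fst ps) (map snd ps))"
      unfolding fD_def by (simp add: ex_map fs_chanK)
  qed
  also have "\<dots> = ex (bind_pmf (iid_pmf n q) (chan K)) (\<lambda>ps. rho_n \<rho> n (map fst ps) (map snd ps))"
    using fQ by (subst ex_bind) (auto simp: fs_chanK)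
  also have "bind_pmf (iid_pmf n q) (chan K) = iid_pmf n PXY" unfolding PXY_def by (rule bind_iid_chan')
  also have "ex (iid_pmf n PXY) (\<lambda>ps. rho_n \<rho> n (map fst ps) (map snd ps)) =
      ex (iid_pmf n PXY) (\<lambda>ps. sum_list (map (\<lambda>(x, y). \<rho> x y) ps) / n)"
    by (rule ex_cong) (simp add: rho_n_def zip_map_fst_snd)
  also have "\<dots> = ex PXY (\<lambda>(x, y). \<rho> x y)"
    using n by (simp add: ex_divc ex_iid_sum fs_finite_type)
  finally show ?thesis .
qed

lemma ex_Phi:
  assumes n: "n > 0" and M: "M > 0" and Mc: "Mc > 0"
  shows "ex (iid_pmf Mc (iid_pmf M (iid_pmf n q))) (\<Phi> n) =
    ex PXY (\<lambda>(x, y). \<rho> x y) + 2 * B * ex (iid_pmf M (iid_pmf n q)) (tX n)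
    + B * ex (iid_pmf (Mc * M) (iid_pmf n q)) (tXY n)"
proof -
  define Q where "Q = iid_pmf n q"
  define RW where "RW = iid_pmf M Q"
  define CB where "CB = iid_pmf Mc RW"
  have fQ: "fs Q" using fq by (simp add: Q_def)
  have fRW: "fs RW" using fQ by (simp add: RW_def)
  have fCB: "fs CB" using fRW by (simp add: CB_def)
  have a: "ex RW (\<lambda>r. sum_list (map (fD n) r) / length r) = ex PXY (\<lambda>(x, y). \<rho> x y)"
  proof -
    have "ex RW (\<lambda>r. sum_list (map (fD n) r) / length r) = ex RW (\<lambda>r. sum_list (map (fD n) r) / M)"
      by (rule ex_cong) (simp add: RW_def set_iid)
    also have "\<dots> = ex Q (fD n)" using M fQ by (simp add: ex_divc RW_def ex_iid_sum)
    finally show ?thesis using fD_avg[OF n] by (simp add: Q_def)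
  qed
  have "ex CB (\<Phi> n) = ex CB (\<lambda>cb. sum_list (map (\<lambda>r. sum_list (map (fD n) r) / length r) cb) / Mc
      + 2 * B * (sum_list (map (tX n) cb) / Mc) + B * tXY n (concat cb))"
    by (rule ex_cong) (simp add: \<Phi>_def CB_def set_iid)
  also have "\<dots> = ex RW (\<lambda>r. sum_list (map (fD n) r) / length r) + 2 * B * ex RW (tX n)
      + B * ex CB (\<lambda>cb. tXY n (concat cb))"
    using Mc fRW by (simp add: ex_add ex_cmult ex_divc CB_def ex_iid_sum)
  also have "ex CB (\<lambda>cb. tXY n (concat cb)) = ex (iid_pmf (Mc * M) Q) (tXY n)"
    using fCB by (simp add: ex_map[symmetric] CB_def RW_def iid_concat)
  finally show ?thesis using a by (simp add: CB_def RW_def Q_def)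
qed

lemma set_CB_ok: "cb \<in> set_pmf (iid_pmf Mc (iid_pmf M (iid_pmf n q))) \<Longrightarrow> cb_ok n M Mc cb"
  unfolding cb_ok_def set_iid by (auto; blast)

end

lemma ex_exists_le: "fs p \<Longrightarrow> \<exists>x\<in>set_pmf p. f x \<le> ex p f"
proof (rule ccontr)
  assume fp: "fs p" and "\<not> (\<exists>x\<in>set_pmf p. f x \<le> ex p f)"
  then have lt: "\<And>x. x \<in> set_pmf p \<Longrightarrow> ex p f < f x" by auto
  have ne: "set_pmf p \<noteq> {}" by (rule set_pmf_not_empty)
  define m where "m = Min (f ` set_pmf p)"
  have "m \<in> f ` set_pmf p" unfolding m_def using fp ne by (intro Min_in) auto
  then obtain x0 where x0: "x0 \<in> set_pmf p" "m = f x0" by auto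
  have "m \<le> ex p f" using fp by (intro ex_ge_const) (auto simp: m_def fp)
  then show False using lt[OF x0(1)] x0(2) by simp
qed


context ach
begin

lemma achieve:
  assumes IX: "sc.I q KX < R" and IXY: "sc.I q K < R + Rc" and Dd: "ex PXY (\<lambda>(x, y). \<rho> x y) \<le> D"
  shows "achievable \<rho> \<mu>0 \<psi>0 D R Rc"
  unfolding achievable_def
proof (intro allI impI)
  fix \<epsilon> :: real assume e: "\<epsilon> > 0"
  interpret SX: sc q KX by standard (rule fq, rule fs_finite_type)
  interpret SK: sc q K by standard (rule fq, rule fs_finite_type)
  have pX: "SX.p = \<mu>0" by (simp add: SX.p_def \<mu>0_def)
  have pK: "SK.p = PXY" by (simp add: SK.p_def PXY_def)
  define e' where "e' = \<epsilon> / (3 * B + 1)"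
  have e': "0 < e'" using e B0 by (simp add: e'_def)
  from SX.softcov[OF IX e'] obtain N1 where N1: "\<forall>n\<ge>N1. \<forall>L::nat. 2 powr (n * R) \<le> real L \<longrightarrow>
      ex (iid_pmf L (iid_pmf n q)) (\<lambda>cs. tv (mix (chan KX) cs) (iid_pmf n SX.p)) \<le> e'"
    by (elim exE)
  from SK.softcov[OF IXY e'] obtain N2 where N2: "\<forall>n\<ge>N2. \<forall>L::nat. 2 powr (n * (R + Rc)) \<le> real L \<longrightarrow>
      ex (iid_pmf L (iid_pmf n q)) (\<lambda>cs. tv (mix (chan K) cs) (iid_pmf n SK.p)) \<le> e'"
    by (elim exE)
  show "\<exists>N. \<forall>n\<ge>N. \<exists>E F. is_code n R Rc E F \<and>
      measure_pmf.expectation (code_law n Rc \<mu>0 E F) (\<lambda>(k, x, j, y). rho_n \<rho> n x y) \<le> D + \<epsilon> \<and>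
      map_pmf (\<lambda>(k, x, j, y). y) (code_law n Rc \<mu>0 E F) = iid_pmf n \<psi>0"
  proof (rule exI[of _ "max (max N1 N2) 1"], intro allI impI)
    fix n assume nN: "max (max N1 N2) 1 \<le> n"
    define M where "M = nat \<lceil>2 powr (real n * R)\<rceil>"
    define Mc where "Mc = nat \<lceil>2 powr (real n * Rc)\<rceil>"
    have n: "n > 0" using nN by simp
    have M: "M > 0" and Mc: "Mc > 0" using idx_set_card[of n R] idx_set_card[of n Rc] by (auto simp: M_def Mc_def)
    have MR: "2 powr (n * R) \<le> real M" unfolding M_def by (rule idx_set_ge)
    have McR: "2 powr (n * Rc) \<le> real Mc" unfolding Mc_def by (rule idx_set_ge)
    have MMc: "2 powr (n * (R + Rc)) \<le> real (Mc * M)"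
    proof -
      have "2 powr (n * (R + Rc)) = 2 powr (n * Rc) * 2 powr (n * R)"
        by (simp add: powr_add[symmetric] algebra_simps)
      also have "\<dots> \<le> real Mc * real M" using MR McR by (intro mult_mono) auto
      finally show ?thesis by simp
    qed
    have tX: "ex (iid_pmf M (iid_pmf n q)) (tX n) \<le> e'"
    proof -
      have "n \<ge> N1" using nN by simp
      then show ?thesis unfolding tX_def pX[symmetric] using N1 MR by blast
    qed
    have tXY: "ex (iid_pmf (Mc * M) (iid_pmf n q)) (tXY n) \<le> e'"
    proof -
      have "n \<ge> N2" using nN by simp
      then show ?thesis unfolding tXY_def pK[symmetric] using N2 MMc by blast
    qed
    define CB where "CB = iid_pmf Mc (iid_pmf M (iid_pmf n q))"
    have fCB: "fs CB" using fq by (simp add: CB_def)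
    have "ex CB (\<Phi> n) \<le> D + 2 * B * e' + B * e'"
    proof -
      have "ex CB (\<Phi> n) = ex PXY (\<lambda>(x, y). \<rho> x y) + 2 * B * ex (iid_pmf M (iid_pmf n q)) (tX n)
        + B * ex (iid_pmf (Mc * M) (iid_pmf n q)) (tXY n)" unfolding CB_def by (rule ex_Phi[OF n M Mc])
      moreover have "2 * B * ex (iid_pmf M (iid_pmf n q)) (tX n) \<le> 2 * B * e'"
        using tX B0 by (intro mult_left_mono) auto
      moreover have "B * ex (iid_pmf (Mc * M) (iid_pmf n q)) (tXY n) \<le> B * e'"
        using tXY B0 by (intro mult_left_mono) auto
      ultimately show ?thesis using Dd by linarith
    qed
    also have "\<dots> \<le> D + \<epsilon>"
    proof -
      have "3 * B * e' = \<epsilon> * (3 * B / (3 * B + 1))" using B0 by (simp add: e'_def)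
      also have "\<dots> \<le> \<epsilon> * 1" using e B0 by (intro mult_left_mono) auto
      finally have "3 * B * e' \<le> \<epsilon>" by simp
      then show ?thesis by simp
    qed
    finally have EP: "ex CB (\<Phi> n) \<le> D + \<epsilon>" .
    obtain cb where cb: "cb \<in> set_pmf CB" and cbP: "\<Phi> n cb \<le> ex CB (\<Phi> n)"
      using ex_exists_le[OF fCB] by blast
    have ok: "cb_ok n M Mc cb" using cb unfolding CB_def by (rule set_CB_ok)
    obtain E F where code: "is_code n R Rc E F"
      and dist: "measure_pmf.expectation (code_law n Rc \<mu>0 E F) (\<lambda>(k, x, j, y). rho_n \<rho> n x y) \<le> \<Phi> n cb"
      and out: "map_pmf (\<lambda>(k, x, j, y). y) (code_law n Rc \<mu>0 E F) = iid_pmf n \<psi>0"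
    proof -
      have i1: "idx_set n R = {1..M}" by (simp add: idx_set_def M_def)
      have i2: "idx_set n Rc = {1..Mc}" by (simp add: idx_set_def Mc_def)
      show ?thesis using code_good[OF n M Mc ok i1 i2] that by blast
    qed
    show "\<exists>E F. is_code n R Rc E F \<and>
      measure_pmf.expectation (code_law n Rc \<mu>0 E F) (\<lambda>(k, x, j, y). rho_n \<rho> n x y) \<le> D + \<epsilon> \<and>
      map_pmf (\<lambda>(k, x, j, y). y) (code_law n Rc \<mu>0 E F) = iid_pmf n \<psi>0"
    proof -
      have "measure_pmf.expectation (code_law n Rc \<mu>0 E F) (\<lambda>(k, x, j, y). rho_n \<rho> n x y) \<le> D + \<epsilon>"
        using dist cbP EP by linarith
      then show ?thesis using code out by blast
    qed
  qed
qed

end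

lemma condS_map:
  assumes "set_pmf W \<inter> {t. fst t = a} \<noteq> {}"
  shows "condS (map_pmf (\<lambda>(a, b). (a, f b)) W) a = map_pmf f (condS W a)"
proof -
  have e: "(\<lambda>(a, b). (a, f b)) -` {t. fst t = a} = {t. fst t = a}" by auto
  have ne: "set_pmf W \<inter> (\<lambda>(a, b). (a, f b)) -` {t. fst t = a} \<noteq> {}" using assms e by simp
  show ?thesis
    unfolding condS_def cond_map_pmf[OF ne] e by (simp add: pmf.map_comp o_def case_prod_unfold)
qed

lemma map_pair_fst: "map_pmf (\<lambda>z. f (fst z)) (pair_pmf A B) = map_pmf f A"
proof -
  have "map_pmf (\<lambda>z. f (fst z)) (pair_pmf A B) = map_pmf f (map_pmf fst (pair_pmf A B))"
    by (simp add: pmf.map_comp o_def)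
  then show ?thesis by (simp add: map_fst_pair_pmf)
qed

lemma achievable_from_P:
  fixes P :: "('a::finite \<times> 'a \<times> nat) pmf" and \<rho> :: "'a \<Rightarrow> 'a \<Rightarrow> real"
  assumes PH: "P \<in> H_set \<rho> \<mu> \<psi> D" and \<rho>0: "\<And>x y. 0 \<le> \<rho> x y"
    and R1: "mi P (\<lambda>(x, y, u). x) (\<lambda>(x, y, u). u) < R"
    and R2: "mi P (\<lambda>(x, y, u). (x, y)) (\<lambda>(x, y, u). u) < R + Rc"
  shows "achievable \<rho> \<mu> \<psi> D R Rc"
proof -
  from PH have mX: "map_pmf (\<lambda>(x, y, u). x) P = \<mu>" and mY: "map_pmf (\<lambda>(x, y, u). y) P = \<psi>"
    and Dist: "measure_pmf.expectation P (\<lambda>(x, y, u). \<rho> x y) \<le> D" and Mk: "markov_XUY P"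
    and bnd: "\<forall>(x, y, u) \<in> set_pmf P. u < CARD('a) * CARD('a) + 1"
    unfolding H_set_def by auto
  have fP: "fs P"
  proof (rule finite_subset)
    show "set_pmf P \<subseteq> UNIV \<times> UNIV \<times> {..<CARD('a) * CARD('a) + 1}" using bnd by auto
  qed simp
  define B where "B = (\<Sum>z\<in>UNIV. (\<lambda>(x, y). \<rho> x y) z)"
  have \<rho>B: "\<rho> x y \<le> B" for x y
  proof -
    have "(\<lambda>(x, y). \<rho> x y) (x, y) \<le> (\<Sum>z\<in>UNIV. (\<lambda>(x, y). \<rho> x y) z)"
      by (rule member_le_sum) (auto simp: \<rho>0)
    then show ?thesis by (simp add: B_def)
  qed
  define q where "q = map_pmf (\<lambda>(x, y, u). u) P"
  define Wsw where "Wsw = map_pmf (\<lambda>(x, y, u). (u, (x, y))) P"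
  define KXY where "KXY u = condS Wsw u" for u
  define KX where "KX u = map_pmf fst (KXY u)" for u
  define KY where "KY u = map_pmf snd (KXY u)" for u
  have fq: "fs q" using fP by (simp add: q_def)
  have fW: "fs Wsw" using fP by (simp add: Wsw_def)
  have mfst: "map_pmf fst Wsw = q" by (simp add: Wsw_def q_def pmf.map_comp o_def case_prod_unfold)
  have dis: "Wsw = bind_pmf q (\<lambda>u. map_pmf (Pair u) (KXY u))"
    using disintegrate[OF fW] unfolding mfst KXY_def .
  have injW: "inj (\<lambda>(x::'a, y::'a, u::nat). (u, (x, y)))" by (auto simp: inj_def)
  have pW: "pmf Wsw (u, (x, y)) = pmf P (x, y, u)" for x y u
    using pmf_map_inj'[OF injW, of P "(x, y, u)"] by (simp add: Wsw_def)
  have neU: "set_pmf Wsw \<inter> {t. fst t = u} \<noteq> {}" if u: "u \<in> set_pmf q" for u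
    using u mfst[symmetric] by auto
  have pKXY: "pmf (KXY u) (x, y) = pmf P (x, y, u) / pmf q u" if u: "u \<in> set_pmf q" for u x y
    unfolding KXY_def using u by (simp add: pmf_condS mfst pW)
  have swp: "\<And>M z. pmf (map_pmf prod.swap M) (prod.swap z) = pmf M z"
    by (rule pmf_map_inj') (simp add: inj_def)
  have pKX: "pmf (KX u) x = pmf (map_pmf (\<lambda>(x, y, u). (x, u)) P) (x, u) / pmf q u" if u: "u \<in> set_pmf q" for u x
  proof -
    have "KX u = condS (map_pmf (\<lambda>(a, b). (a, fst b)) Wsw) u"
      unfolding KX_def KXY_def by (rule condS_map[symmetric]) (rule neU[OF u])
    moreover have "map_pmf (\<lambda>(a, b). (a, fst b)) Wsw = map_pmf prod.swap (map_pmf (\<lambda>(x, y, u). (x, u)) P)"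
      by (simp add: Wsw_def pmf.map_comp o_def case_prod_unfold prod.swap_def)
    moreover have "map_pmf fst (map_pmf (\<lambda>(a, b). (a, fst b)) Wsw) = q"
      using mfst by (simp add: pmf.map_comp o_def case_prod_unfold)
    ultimately show ?thesis using u swp[of _ "(x, u)"]
      by (simp add: pmf_condS)
  qed
  have pKY: "pmf (KY u) y = pmf (map_pmf (\<lambda>(x, y, u). (y, u)) P) (y, u) / pmf q u" if u: "u \<in> set_pmf q" for u y
  proof -
    have "KY u = condS (map_pmf (\<lambda>(a, b). (a, snd b)) Wsw) u"
      unfolding KY_def KXY_def by (rule condS_map[symmetric]) (rule neU[OF u])
    moreover have "map_pmf (\<lambda>(a, b). (a, snd b)) Wsw = map_pmf prod.swap (map_pmf (\<lambda>(x, y, u). (y, u)) P)"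
      by (simp add: Wsw_def pmf.map_comp o_def case_prod_unfold prod.swap_def)
    moreover have "map_pmf fst (map_pmf (\<lambda>(a, b). (a, snd b)) Wsw) = q"
      using mfst by (simp add: pmf.map_comp o_def case_prod_unfold)
    ultimately show ?thesis using u swp[of _ "(y, u)"]
      by (simp add: pmf_condS)
  qed
  have Kpair: "KXY u = pair_pmf (KX u) (KY u)" if u: "u \<in> set_pmf q" for u
  proof (rule pmf_eqI)
    fix z :: "'a \<times> 'a"
    obtain x y where z: "z = (x, y)" by (cases z)
    have qu: "0 < pmf q u" using u by (simp add: pmf_positive)
    have mk: "pmf P (x, y, u) * pmf q u = pmf (map_pmf (\<lambda>(x, y, u). (x, u)) P) (x, u) * pmf (map_pmf (\<lambda>(x, y, u). (y, u)) P) (y, u)"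
      using Mk unfolding markov_XUY_def q_def by blast
    show "pmf (KXY u) z = pmf (pair_pmf (KX u) (KY u)) z"
    proof -
      have "pmf (pair_pmf (KX u) (KY u)) z = pmf P (x, y, u) * pmf q u / (pmf q u * pmf q u)"
        unfolding z pmf_pair pKX[OF u] pKY[OF u] mk by simp
      also have "\<dots> = pmf P (x, y, u) / pmf q u" using qu by simp
      finally show ?thesis unfolding z pKXY[OF u] by simp
    qed
  qed
  interpret A: ach q KX KY \<rho> B by standard (rule fq, rule \<rho>0, rule \<rho>B)
  have Keq: "A.K u = KXY u" if "u \<in> set_pmf q" for u using Kpair[OF that] by (simp add: A.K_def)
  have Wj: "bind_pmf q (\<lambda>u. map_pmf (\<lambda>v. (v, u)) (A.K u)) = map_pmf (\<lambda>(x, y, u). ((x, y), u)) P"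
  proof -
    have "map_pmf (\<lambda>(x, y, u). ((x, y), u)) P = map_pmf prod.swap Wsw"
      by (simp add: Wsw_def pmf.map_comp o_def case_prod_unfold prod.swap_def)
    also have "\<dots> = bind_pmf q (\<lambda>u. map_pmf (\<lambda>v. (v, u)) (KXY u))"
      by (subst dis) (simp add: map_bind_pmf pmf.map_comp o_def)
    also have "\<dots> = bind_pmf q (\<lambda>u. map_pmf (\<lambda>v. (v, u)) (A.K u))"
      by (rule bind_pmf_cong) (simp_all add: Keq)
    finally show ?thesis ..
  qed
  have PXYeq: "A.PXY = map_pmf (\<lambda>(x, y, u). (x, y)) P"
  proof -
    have "A.PXY = map_pmf fst (bind_pmf q (\<lambda>u. map_pmf (\<lambda>v. (v, u)) (A.K u)))"
      by (simp add: A.PXY_def map_bind_pmf pmf.map_comp o_def)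
    also have "\<dots> = map_pmf (\<lambda>(x, y, u). (x, y)) P" by (simp add: Wj pmf.map_comp o_def case_prod_unfold)
    finally show ?thesis .
  qed
  have mu0: "A.\<mu>0 = \<mu>"
  proof -
    have "A.\<mu>0 = map_pmf fst A.PXY"
      by (simp add: A.\<mu>0_def A.PXY_def map_bind_pmf A.K_def map_fst_pair_pmf)
    then show ?thesis by (simp add: PXYeq pmf.map_comp o_def case_prod_unfold mX[symmetric])
  qed
  have psi0: "A.\<psi>0 = \<psi>"
  proof -
    have "A.\<psi>0 = map_pmf snd A.PXY"
      by (simp add: A.\<psi>0_def A.PXY_def map_bind_pmf A.K_def map_snd_pair_pmf)
    then show ?thesis by (simp add: PXYeq pmf.map_comp o_def case_prod_unfold mY[symmetric])
  qed
  have Dd: "ex A.PXY (\<lambda>(x, y). \<rho> x y) \<le> D"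
    using Dist fP by (simp add: PXYeq ex_map ex_eq_integral case_prod_unfold)
  interpret SX: sc q KX by standard (rule fq, rule fs_finite_type)
  interpret SK: sc q A.K by standard (rule fq, rule fs_finite_type)
  have IXY: "SK.I = mi P (\<lambda>(x, y, u). (x, y)) (\<lambda>(x, y, u). u)"
  proof -
    have J: "map_pmf (\<lambda>c. ((\<lambda>(x, y, u). (x, y)) c, (\<lambda>(x, y, u). u) c)) P = SK.Wj"
      unfolding SK.Wj_def Wj by (simp add: case_prod_unfold)
    have p1: "map_pmf (\<lambda>(x, y, u). (x, y)) P = SK.p" unfolding SK.p_def using PXYeq by (simp add: A.PXY_def)
    have p2: "map_pmf (\<lambda>(x, y, u). u) P = q" by (simp add: q_def)
    show ?thesis unfolding mi_finite[OF fP] J p1 p2 SK.I_def ..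
  qed
  have IX: "SX.I = mi P (\<lambda>(x, y, u). x) (\<lambda>(x, y, u). u)"
  proof -
    have "map_pmf (\<lambda>c. ((\<lambda>(x, y, u). x) c, (\<lambda>(x, y, u). u) c)) P =
        map_pmf (\<lambda>(v, u). (fst v, u)) (map_pmf (\<lambda>(x, y, u). ((x, y), u)) P)"
      by (simp add: pmf.map_comp o_def case_prod_unfold)
    also have "\<dots> = SX.Wj"
      unfolding Wj[symmetric] SX.Wj_def
      apply (simp add: map_bind_pmf pmf.map_comp o_def A.K_def)
      apply (rule bind_pmf_cong[OF refl])
      apply (rule map_pair_fst)
      done
    finally have J: "map_pmf (\<lambda>c. ((\<lambda>(x, y, u). x) c, (\<lambda>(x, y, u). u) c)) P = SX.Wj" .
    have p1: "map_pmf (\<lambda>(x, y, u). x) P = SX.p" unfolding SX.p_def using mu0 mX by (simp add: A.\<mu>0_def)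
    have p2: "map_pmf (\<lambda>(x, y, u). u) P = q" by (simp add: q_def)
    show ?thesis unfolding mi_finite[OF fP] J p1 p2 SX.I_def ..
  qed
  have "achievable \<rho> A.\<mu>0 A.\<psi>0 D R Rc"
    by (rule A.achieve) (use IX IXY R1 R2 Dd in auto)
  then show ?thesis using mu0 psi0 by simp
qed


theorem corollary1:
  fixes d :: "'a::finite \<Rightarrow> 'a \<Rightarrow> real" and p D :: real and \<mu> \<psi> :: "'a pmf"
  assumes "\<forall>x y. d x y = 0 \<longleftrightarrow> x = y"
    and "\<forall>x y. d x y = d y x"
    and "\<forall>x y z. d x z \<le> d x y + d y z"
    and "p > 0"
    and "D \<ge> 0"
  shows "S_set (\<lambda>x y. d x y powr p) \<mu> \<psi> D
           \<subseteq> closure (rate_region (\<lambda>x y. d x y powr p) \<mu> \<psi> D)"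
proof
  fix z assume z: "z \<in> S_set (\<lambda>x y. d x y powr p) \<mu> \<psi> D"
  obtain R Rc where zR: "z = (R, Rc)" by (cases z)
  from z obtain P where PH: "P \<in> H_set (\<lambda>x y. d x y powr p) \<mu> \<psi> D"
    and R1: "mi P (\<lambda>(x, y, u). x) (\<lambda>(x, y, u). u) \<le> R"
    and R2: "mi P (\<lambda>(x, y, u). (x, y)) (\<lambda>(x, y, u). u) \<le> R + Rc"
    unfolding S_set_def zR by auto
  show "z \<in> closure (rate_region (\<lambda>x y. d x y powr p) \<mu> \<psi> D)"
    unfolding closure_approachable zR
  proof (intro allI impI)
    fix e :: real assume e: "e > 0"
    define y where "y = (R + e / 2, Rc + e / 2)"
    have "achievable (\<lambda>x y. d x y powr p) \<mu> \<psi> D (R + e / 2) (Rc + e / 2)"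
      by (rule achievable_from_P[OF PH]) (use R1 R2 e in auto)
    then have "y \<in> rate_region (\<lambda>x y. d x y powr p) \<mu> \<psi> D" by (simp add: rate_region_def y_def)
    moreover have "dist y (R, Rc) < e"
    proof -
      have "dist y (R, Rc) = sqrt ((e / 2)^2 + (e / 2)^2)"
        using e by (simp add: y_def dist_Pair_Pair dist_real_def)
      also have "\<dots> = sqrt (e^2 / 2)" by (simp add: power2_eq_square field_simps)
      also have "\<dots> < sqrt (e^2)" using e by (intro real_sqrt_less_mono) simp
      also have "\<dots> = e" using e by simp
      finally show ?thesis .
    qed
    ultimately show "\<exists>y\<in>rate_region (\<lambda>x y. d x y powr p) \<mu> \<psi> D. dist y (R, Rc) < e" by blast
  qed
qed

end
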